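(* Consider the linear system $y'(t)=Ay(t)+Bu(t)$, $t\in[0,T]$, $y(0)=y_0$, with mild solution $y(t)=\mathfrak{U}(t)y_0+\int_0^t\mathfrak{U}(t-s)Bu(s)\,ds$, and let $M\subset\mathfrak{X}$ be a fixed finite-dimensional subspace with orthogonal projection $\pi_M$. The following are equivalent: (i) the system is approximately controllable on $[0,T]$; (ii) $\Gamma_0^T$ is positive, i.e. $\langle\Gamma_0^Tx,x\rangle>0$ for all $0\ne x\in\mathfrak{X}$; (iii) $\varepsilon(\varepsilon I+\Gamma_0^T)^{-1}\to0$ as $\varepsilon\to0^+$ in the strong operator topology; (iv) $\varepsilon(\varepsilon(I-\pi_M)+\Gamma_0^T)^{-1}\to0$ as $\varepsilon\to0^+$ in the strong operator topology; (v) the system is finite-approximately controllable on $[0,T]$ (with respect to $M$).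
   Context: $\mathfrak{X}$, $U$ are Hilbert spaces; $A:D(A)\subset\mathfrak{X}\to\mathfrak{X}$ is a densely defined closed operator generating a $C_0$-semigroup $\mathfrak{U}(t)$; $B\in L(U,\mathfrak{X})$; controls $u\in L^2([0,T],U)$. The controllability Gramian is $\Gamma_0^T=\int_0^T\mathfrak{U}(T-s)BB^*\mathfrak{U}^*(T-s)\,ds\in L(\mathfrak{X})$. The system is approximately controllable on $[0,T]$ if for all $y_0,y_f\in\mathfrak{X}$ and $\varepsilon>0$ there is $u\in L^2([0,T],U)$ with $\|y(T)-y_f\|<\varepsilon$. It is finite-approximately controllable on $[0,T]$ (with respect to the finite-dimensional subspace $M$) if for all $y_0,y_f\in\mathfrak{X}$ and $\varepsilon>0$ there is $u\in L^2([0,T],U)$ with $\|y(T)-y_f\|<\varepsilon$ and $\pi_My(T)=\pi_My_f$. *)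

theory Defs
  imports "HOL-Analysis.Analysis"
begin

definition C0_semigroup :: "(real \<Rightarrow> 'x::{real_inner,complete_space} \<Rightarrow>\<^sub>L 'x) \<Rightarrow> bool" where
  "C0_semigroup S \<longleftrightarrow>
     S 0 = id_blinfun \<and>
     (\<forall>t s. 0 \<le> t \<longrightarrow> 0 \<le> s \<longrightarrow> S (t + s) = S t o\<^sub>L S s) \<and>
     (\<forall>x. ((\<lambda>t. blinfun_apply (S t) x) \<longlongrightarrow> x) (at_right 0))"

definition generator :: "(real \<Rightarrow> 'x::{real_inner,complete_space} \<Rightarrow>\<^sub>L 'x) \<Rightarrow> 'x set \<Rightarrow> ('x \<Rightarrow> 'x) \<Rightarrow> bool" where
  "generator S D A \<longleftrightarrow>
     D = {x. \<exists>y. ((\<lambda>h. (1 / h) *\<^sub>R (blinfun_apply (S h) x - x)) \<longlongrightarrow> y) (at_right 0)} \<and>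
     (\<forall>x\<in>D. ((\<lambda>h. (1 / h) *\<^sub>R (blinfun_apply (S h) x - x)) \<longlongrightarrow> A x) (at_right 0))"

definition strongly_measurable_on :: "real set \<Rightarrow> (real \<Rightarrow> 'u::real_normed_vector) \<Rightarrow> bool" where
  "strongly_measurable_on I u \<longleftrightarrow>
     (\<exists>f :: nat \<Rightarrow> real \<Rightarrow> 'u.
        (\<forall>n. finite (range (f n)) \<and> (\<forall>v. f n -` {v} \<inter> I \<in> sets lebesgue)) \<and>
        (AE s in lebesgue_on I. (\<lambda>n. f n s) \<longlonglongrightarrow> u s))"

definition L2_controls :: "real \<Rightarrow> (real \<Rightarrow> 'u::real_normed_vector) set" where
  "L2_controls T = {u. strongly_measurable_on {0..T} u \<and>
                       integrable (lebesgue_on {0..T}) (\<lambda>s. (norm (u s))\<^sup>2)}"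

definition mild_solution ::
  "(real \<Rightarrow> 'x::{real_inner,complete_space} \<Rightarrow>\<^sub>L 'x) \<Rightarrow> ('u::{real_inner,complete_space} \<Rightarrow>\<^sub>L 'x)
     \<Rightarrow> 'x \<Rightarrow> (real \<Rightarrow> 'u) \<Rightarrow> real \<Rightarrow> 'x" where
  "mild_solution S B y0 u t =
     blinfun_apply (S t) y0 + integral {0..t} (\<lambda>s. blinfun_apply (S (t - s)) (blinfun_apply B (u s)))"

definition gramian ::
  "(real \<Rightarrow> 'x::{real_inner,complete_space} \<Rightarrow>\<^sub>L 'x) \<Rightarrow> ('u::{real_inner,complete_space} \<Rightarrow>\<^sub>L 'x)
     \<Rightarrow> real \<Rightarrow> 'x \<Rightarrow> 'x" where
  "gramian S B T x =
     integral {0..T} (\<lambda>s. blinfun_apply (S (T - s))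
        (blinfun_apply B (adjoint (blinfun_apply B) (adjoint (blinfun_apply (S (T - s))) x))))"

definition orth_proj :: "'x::real_inner set \<Rightarrow> 'x \<Rightarrow> 'x" where
  "orth_proj M x = (THE m. m \<in> M \<and> (\<forall>v\<in>M. (x - m) \<bullet> v = 0))"

definition approx_controllable ::
  "(real \<Rightarrow> 'x::{real_inner,complete_space} \<Rightarrow>\<^sub>L 'x) \<Rightarrow> ('u::{real_inner,complete_space} \<Rightarrow>\<^sub>L 'x)
     \<Rightarrow> real \<Rightarrow> bool" where
  "approx_controllable S B T \<longleftrightarrow>
     (\<forall>y0 yf e. e > 0 \<longrightarrow>
        (\<exists>u \<in> L2_controls T. norm (mild_solution S B y0 u T - yf) < e))"

definition finite_approx_controllable ::
  "(real \<Rightarrow> 'x::{real_inner,complete_space} \<Rightarrow>\<^sub>L 'x) \<Rightarrow> ('u::{real_inner,complete_space} \<Rightarrow>\<^sub>L 'x)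
     \<Rightarrow> real \<Rightarrow> 'x set \<Rightarrow> bool" where
  "finite_approx_controllable S B T M \<longleftrightarrow>
     (\<forall>y0 yf e. e > 0 \<longrightarrow>
        (\<exists>u \<in> L2_controls T. norm (mild_solution S B y0 u T - yf) < e \<and>
            orth_proj M (mild_solution S B y0 u T) = orth_proj M yf))"

end

theory Submission
  imports Defs
begin

lemma parallelogram_mid:
  fixes x a b :: "'a::real_inner"
  shows "(norm (a - b))\<^sup>2 = 2 * (norm (x - a))\<^sup>2 + 2 * (norm (x - b))\<^sup>2 - 4 * (norm (x - (1/2) *\<^sub>R (a + b)))\<^sup>2"
  unfolding power2_norm_eq_inner
  by (simp add: inner_diff_left inner_diff_right inner_add_left inner_add_right inner_commute algebra_simps)

lemma infdist_near:
  assumes "A \<noteq> {}" "e > 0"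
  shows "\<exists>a\<in>A. dist x a < infdist x A + e"
proof -
  have "(INF a\<in>A. dist x a) < infdist x A + e" using assms by (simp add: infdist_def)
  then show ?thesis using assms
    by (subst (asm) cINF_less_iff) (auto intro: bdd_belowI2[where m=0])
qed

lemma proj_closed_subspace:
  fixes K :: "'a::{real_inner,complete_space} set"
  assumes K: "subspace K" "closed K"
  shows "\<exists>p\<in>K. \<forall>v\<in>K. (x - p) \<bullet> v = 0"
proof -
  define d where "d = infdist x K"
  have K0: "0 \<in> K" using K subspace_0 by blast
  have dle: "\<And>k. k \<in> K \<Longrightarrow> d \<le> dist x k" unfolding d_def by (rule infdist_le)
  have d0: "0 \<le> d" unfolding d_def by (rule infdist_nonneg)
  have "\<forall>n. \<exists>k\<in>K. dist x k < d + 1 / Suc n"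
    using infdist_near[of K "1 / Suc n" x for n] K0 unfolding d_def by auto
  then obtain P where P: "\<And>n. P n \<in> K" "\<And>n. dist x (P n) < d + 1 / Suc n"
    by metis
  have keyb: "(norm (P m - P n))\<^sup>2 \<le> 4 * (1 / Suc N) * (2 * d + 1)" if "m \<ge> N" "n \<ge> N" for m n N
  proof -
    have mid: "(1/2) *\<^sub>R (P m + P n) \<in> K"
      using K(1) P(1) by (simp add: subspace_add subspace_scale)
    have h1: "d \<le> norm (x - (1/2) *\<^sub>R (P m + P n))" using dle[OF mid] by (simp add: dist_norm)
    have em: "1 / real (Suc m) \<le> 1 / Suc N" and en: "1 / real (Suc n) \<le> 1 / Suc N"
      using that by (auto simp: divide_simps)
    have N1: "1 / real (Suc N) \<le> 1" by (simp add: divide_simps)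
    have am: "norm (x - P m) \<le> d + 1 / Suc N" using P(2)[of m] em by (simp add: dist_norm)
    have an: "norm (x - P n) \<le> d + 1 / Suc N" using P(2)[of n] en by (simp add: dist_norm)
    have sm: "(norm (x - P m))\<^sup>2 \<le> (d + 1 / Suc N)\<^sup>2" using am by (simp add: power_mono)
    have sn: "(norm (x - P n))\<^sup>2 \<le> (d + 1 / Suc N)\<^sup>2" using an by (simp add: power_mono)
    have sd: "d\<^sup>2 \<le> (norm (x - (1/2) *\<^sub>R (P m + P n)))\<^sup>2" using h1 d0 by (simp add: power_mono)
    have "(norm (P m - P n))\<^sup>2 \<le> 4 * (d + 1 / Suc N)\<^sup>2 - 4 * d\<^sup>2"
      using parallelogram_mid[of "P m" "P n" x] sm sn sd by linarith
    also have "\<dots> = 4 * (1 / Suc N) * (2 * d + 1 / Suc N)" by (simp add: power2_eq_square algebra_simps)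
    also have "\<dots> \<le> 4 * (1 / Suc N) * (2 * d + 1)" using N1 by (intro mult_left_mono) auto
    finally show ?thesis .
  qed
  have "Cauchy P"
  proof (rule metric_CauchyI)
    fix e :: real assume e: "e > 0"
    obtain N :: nat where N: "4 * (2 * d + 1) / e\<^sup>2 < N" using reals_Archimedean2 by blast
    have "4 * (1 / Suc N) * (2 * d + 1) < e\<^sup>2"
    proof -
      have "4 * (2 * d + 1) < e\<^sup>2 * N" using N e by (simp add: divide_simps mult.commute)
      also have "\<dots> \<le> e\<^sup>2 * Suc N" using e by simp
      finally show ?thesis by (simp add: divide_simps)
    qed
    then have "\<forall>m\<ge>N. \<forall>n\<ge>N. dist (P m) (P n) < e"
    proof (intro allI impI)
      fix m n assume "m \<ge> N" "n \<ge> N"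
      from keyb[OF this] \<open>4 * (1 / Suc N) * (2 * d + 1) < e\<^sup>2\<close>
      have "(norm (P m - P n))\<^sup>2 < e\<^sup>2" by linarith
      then show "dist (P m) (P n) < e" using e unfolding dist_norm
        using power_less_imp_less_base[of "norm (P m - P n)" 2 e] by simp
    qed
    then show "\<exists>M. \<forall>m\<ge>M. \<forall>n\<ge>M. dist (P m) (P n) < e" by blast
  qed
  then obtain p where pl: "P \<longlonglongrightarrow> p" using Cauchy_convergent convergent_def by blast
  have pK: "p \<in> K" using K(2) P(1) pl closed_sequentially by blast
  have l1: "(\<lambda>n. dist x (P n)) \<longlonglongrightarrow> dist x p" using pl by (intro tendsto_intros)
  have l2: "(\<lambda>n. dist x (P n)) \<longlonglongrightarrow> d"
  proof (rule tendsto_sandwich[where f="\<lambda>n. d" and h="\<lambda>n. d + 1 / Suc n"])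
    show "\<forall>\<^sub>F n in sequentially. d \<le> dist x (P n)" using dle P(1) by auto
    show "\<forall>\<^sub>F n in sequentially. dist x (P n) \<le> d + 1 / Suc n" using P(2) by (intro always_eventually allI less_imp_le) blast
    show "(\<lambda>n. d + 1 / real (Suc n)) \<longlonglongrightarrow> d"
      using tendsto_add[OF tendsto_const LIMSEQ_inverse_real_of_nat[unfolded inverse_eq_divide]] by simp
  qed simp
  have dp: "dist x p = d" using LIMSEQ_unique[OF l1 l2] .
  have "(x - p) \<bullet> v = 0" if v: "v \<in> K" for v
  proof (cases "v = 0")
    case True then show ?thesis by simp
  next
    case False
    define c where "c = (x - p) \<bullet> v"
    define t where "t = c / (v \<bullet> v)"
    have vv: "v \<bullet> v > 0" using False by simp
    have "p + t *\<^sub>R v \<in> K" using K(1) pK v by (simp add: subspace_add subspace_scale)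
    then have "d \<le> norm (x - (p + t *\<^sub>R v))" using dle by (simp add: dist_norm)
    then have "(norm (x - p))\<^sup>2 \<le> (norm ((x - p) - t *\<^sub>R v))\<^sup>2"
      using dp d0 by (simp add: dist_norm power_mono algebra_simps)
    also have "\<dots> = (norm (x - p))\<^sup>2 - 2 * t * c + t\<^sup>2 * (v \<bullet> v)"
      unfolding power2_norm_eq_inner c_def
      by (simp add: inner_diff_left inner_diff_right inner_commute power2_eq_square algebra_simps)
    finally have "0 \<le> - 2 * t * c + t\<^sup>2 * (v \<bullet> v)" by simp
    also have "- 2 * t * c + t\<^sup>2 * (v \<bullet> v) = - c\<^sup>2 / (v \<bullet> v)"
      using vv unfolding t_def by (simp add: power2_eq_square field_simps)
    finally have "c\<^sup>2 \<le> 0" using vv by (simp add: divide_simps split: if_splits)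
    then show ?thesis unfolding c_def by simp
  qed
  then show ?thesis using pK by blast
qed


lemma eq_by_inner:
  fixes u v :: "'a::real_inner"
  assumes "\<And>x. x \<bullet> u = x \<bullet> v" shows "u = v"
proof -
  have "(u - v) \<bullet> u = (u - v) \<bullet> v" by (rule assms)
  then have "(u - v) \<bullet> (u - v) = 0" by (simp add: inner_diff_right)
  then show ?thesis by simp
qed

lemma riesz:
  fixes phi :: "'a::{real_inner,complete_space} \<Rightarrow> real"
  assumes bl: "bounded_linear phi"
  shows "\<exists>z. \<forall>y. phi y = z \<bullet> y"
proof -
  interpret bounded_linear phi by fact
  define K where "K = {y. phi y = 0}"
  have sK: "subspace K" unfolding K_def subspace_def by (auto simp: add scaleR zero)
  have "continuous_on UNIV phi" by (intro linear_continuous_on bl)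
  then have cK: "closed K" unfolding K_def by (intro closed_Collect_eq continuous_on_const) auto
  show ?thesis
  proof (cases "\<forall>w. phi w = 0")
    case True then show ?thesis by (intro exI[of _ 0]) simp
  next
    case False
    then obtain w where w: "phi w \<noteq> 0" by blast
    obtain p where p: "p \<in> K" "\<forall>v\<in>K. (w - p) \<bullet> v = 0" using proj_closed_subspace[OF sK cK] by blast
    define q where "q = w - p"
    have pq: "phi q = phi w" using p(1) unfolding q_def K_def by (simp add: diff)
    have qq: "q \<bullet> q \<noteq> 0" using pq w zero by auto
    show ?thesis
    proof (intro exI[of _ "(phi q / (q \<bullet> q)) *\<^sub>R q"] allI)
      fix y
      have "y - (phi y / phi q) *\<^sub>R q \<in> K" unfolding K_def using pq w by (simp add: diff scaleR)
      then have "q \<bullet> (y - (phi y / phi q) *\<^sub>R q) = 0" using p(2) q_def by blast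
      then have "q \<bullet> y = (phi y / phi q) * (q \<bullet> q)" by (simp add: inner_diff_right)
      then show "phi y = ((phi q / (q \<bullet> q)) *\<^sub>R q) \<bullet> y" using qq pq w by (simp add: field_simps)
    qed
  qed
qed

lemma adjoint_prop:
  fixes f :: "'a::{real_inner,complete_space} \<Rightarrow> 'b::real_inner"
  assumes "bounded_linear f"
  shows "f x \<bullet> y = x \<bullet> adjoint f y"
proof -
  have "\<forall>y. \<exists>z. \<forall>x. f x \<bullet> y = z \<bullet> x"
    by (intro allI riesz bounded_linear_inner_left_comp assms)
  then obtain g where g: "\<And>x y. f x \<bullet> y = g y \<bullet> x" by metis
  have "\<forall>x y. f x \<bullet> y = x \<bullet> g y" using g by (simp add: inner_commute)
  then have "\<forall>x y. f x \<bullet> y = x \<bullet> adjoint f y" unfolding adjoint_def by (rule someI[where P="\<lambda>f'. \<forall>x y. f x \<bullet> y = x \<bullet> f' y"])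
  then show ?thesis by blast
qed

lemma adjoint_bounded_linear:
  fixes f :: "'a::{real_inner,complete_space} \<Rightarrow> 'b::real_inner"
  assumes bl: "bounded_linear f" shows "bounded_linear (adjoint f)"
proof -
  let ?g = "adjoint f"
  have g: "\<And>x y. f x \<bullet> y = x \<bullet> ?g y" using adjoint_prop bl by blast
  interpret bounded_linear f by fact
  obtain K where K: "K > 0" "\<And>x. norm (f x) \<le> norm x * K" using pos_bounded by blast
  show ?thesis
  proof (rule bounded_linear_intro)
    fix a b show "?g (a + b) = ?g a + ?g b"
      by (rule eq_by_inner) (simp add: g[symmetric] inner_add_right)
  next
    fix r a show "?g (r *\<^sub>R a) = r *\<^sub>R ?g a"
      by (rule eq_by_inner) (simp add: g[symmetric])
  next
    fix y
    have "(norm (?g y))\<^sup>2 = f (?g y) \<bullet> y" by (simp add: g power2_norm_eq_inner)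
    also have "\<dots> \<le> norm (f (?g y)) * norm y" by (rule norm_cauchy_schwarz)
    also have "\<dots> \<le> norm (?g y) * K * norm y" using K by (simp add: mult_right_mono)
    finally have "norm (?g y) * norm (?g y) \<le> norm (?g y) * (norm y * K)" by (simp add: power2_eq_square algebra_simps)
    then show "norm (?g y) \<le> norm y * K" using K(1)
      by (cases "norm (?g y) = 0") (auto simp: mult_le_cancel_left)
  qed
qed

lemma adjoint_norm_le:
  fixes f :: "'a::{real_inner,complete_space} \<Rightarrow> 'b::real_inner"
  assumes bl: "bounded_linear f" and K: "\<And>x. norm (f x) \<le> K * norm x" and K0: "K \<ge> 0"
  shows "norm (adjoint f y) \<le> K * norm y"
proof -
  let ?g = "adjoint f"
  have g: "\<And>x y. f x \<bullet> y = x \<bullet> ?g y" using adjoint_prop bl by blast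
  have "(norm (?g y))\<^sup>2 = f (?g y) \<bullet> y" by (simp add: g power2_norm_eq_inner)
  also have "\<dots> \<le> norm (f (?g y)) * norm y" by (rule norm_cauchy_schwarz)
  also have "\<dots> \<le> K * norm (?g y) * norm y" using K by (simp add: mult_right_mono)
  finally have "norm (?g y) * norm (?g y) \<le> norm (?g y) * (K * norm y)" by (simp add: power2_eq_square algebra_simps)
  then show ?thesis using K0
    by (cases "norm (?g y) = 0") (auto simp: mult_le_cancel_left)
qed

typedef 'a hc = "UNIV :: 'a::{real_inner,complete_space} set" by simp
setup_lifting type_definition_hc

instantiation hc :: ("{real_inner,complete_space}") real_inner
begin
lift_definition zero_hc :: "'a hc" is 0 .
lift_definition plus_hc :: "'a hc \<Rightarrow> 'a hc \<Rightarrow> 'a hc" is "(+)" .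
lift_definition minus_hc :: "'a hc \<Rightarrow> 'a hc \<Rightarrow> 'a hc" is "(-)" .
lift_definition uminus_hc :: "'a hc \<Rightarrow> 'a hc" is uminus .
lift_definition scaleR_hc :: "real \<Rightarrow> 'a hc \<Rightarrow> 'a hc" is scaleR .
lift_definition norm_hc :: "'a hc \<Rightarrow> real" is norm .
lift_definition sgn_hc :: "'a hc \<Rightarrow> 'a hc" is sgn .
lift_definition dist_hc :: "'a hc \<Rightarrow> 'a hc \<Rightarrow> real" is dist .
lift_definition inner_hc :: "'a hc \<Rightarrow> 'a hc \<Rightarrow> real" is inner .
definition uniformity_hc :: "('a hc \<times> 'a hc) filter" where
  "uniformity_hc = (INF e\<in>{0<..}. principal {(x, y). dist x y < e})"
definition open_hc :: "'a hc set \<Rightarrow> bool" where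
  "open_hc U = (\<forall>x\<in>U. \<forall>\<^sub>F (x', y) in uniformity. x' = x \<longrightarrow> y \<in> U)"
instance
proof
  show "(uniformity :: ('a hc \<times> 'a hc) filter) = (INF e\<in>{0<..}. principal {(x, y). dist x y < e})"
    by (simp add: uniformity_hc_def)
  show "open U = (\<forall>x\<in>U. \<forall>\<^sub>F (x', y) in uniformity. x' = x \<longrightarrow> y \<in> U)" for U :: "'a hc set"
    by (simp add: open_hc_def)
qed (transfer; auto simp: algebra_simps dist_norm sgn_div_norm inner_add_left norm_triangle_ineq
       inner_commute norm_eq_sqrt_inner)+
end

lemma dist_Abs_hc: "dist (Abs_hc x) (Abs_hc y) = dist x y"
  by (simp add: dist_hc.abs_eq eq_onp_same_args)

lemma dist_Rep_hc: "dist (Rep_hc x) (Rep_hc y) = dist x y"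
  by (metis Rep_hc_inverse dist_Abs_hc)

instance hc :: ("{real_inner,complete_space}") complete_space
proof
  fix X :: "nat \<Rightarrow> 'a hc" assume "Cauchy X"
  then have "Cauchy (\<lambda>n. Rep_hc (X n))" unfolding Cauchy_def by (simp add: dist_Rep_hc)
  then obtain l where "(\<lambda>n. Rep_hc (X n)) \<longlonglongrightarrow> l" using Cauchy_convergent convergent_def by blast
  then have "X \<longlonglongrightarrow> Abs_hc l" unfolding LIMSEQ_iff_nz
    by (metis Rep_hc_inverse dist_Abs_hc)
  then show "convergent X" unfolding convergent_def by blast
qed

instance hc :: ("{real_inner,complete_space}") banach ..

lemma bounded_linear_Rep_hc: "bounded_linear Rep_hc"
proof (rule bounded_linear_intro[where K=1])
  show "Rep_hc (a + b) = Rep_hc a + Rep_hc b" for a b by transfer simp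
  show "Rep_hc (r *\<^sub>R a) = r *\<^sub>R Rep_hc a" for r a by transfer simp
  show "norm (Rep_hc a) \<le> norm a * 1" for a by transfer simp
qed

lemma integrable_continuous_hilbert:
  fixes f :: "real \<Rightarrow> 'x::{real_inner,complete_space}"
  assumes "continuous_on {a..b} f"
  shows "f integrable_on {a..b}"
proof -
  have "continuous_on {a..b} (\<lambda>s. Abs_hc (f s))"
    using assms unfolding continuous_on_iff by (simp add: dist_Abs_hc)
  then have "(\<lambda>s. Abs_hc (f s)) integrable_on {a..b}" by (rule integrable_continuous_interval)
  from integrable_linear[OF this bounded_linear_Rep_hc] show ?thesis
    by (simp add: o_def Abs_hc_inverse)
qed

lemma ubp:
  fixes F :: "'i \<Rightarrow> 'a::{real_normed_vector,complete_space} \<Rightarrow> 'b::real_normed_vector"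
  assumes bl: "\<And>i. bounded_linear (F i)"
    and pt: "\<And>x. \<exists>c. \<forall>i. norm (F i x) \<le> c"
  shows "\<exists>C. \<forall>i x. norm (F i x) \<le> C * norm x"
proof -
  define E where "E n = (\<Inter>i. {x. norm (F i x) \<le> real n})" for n :: nat
  have cE: "closed (E n)" for n
    unfolding E_def
    by (intro closed_INT ballI closed_Collect_le continuous_on_norm continuous_on_const
        linear_continuous_on bl)
  have UE: "(\<Union>n. E n) = UNIV"
  proof -
    have "x \<in> (\<Union>n. E n)" for x
    proof -
      obtain c where c: "\<forall>i. norm (F i x) \<le> c" using pt by blast
      obtain n :: nat where "c \<le> n" using real_arch_simple by blast
      then show ?thesis using c unfolding E_def by (auto intro: order_trans)
    qed
    then show ?thesis by blast
  qed
  have "\<exists>n. interior (E n) \<noteq> {}"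
  proof (rule ccontr)
    assume "\<not> ?thesis"
    then have "Met_TC.mtopology interior_of \<Union>(range E) = {}"
      by (intro Met_TC.metric_Baire_category_alt) (auto simp: complete_UNIV cE)
    then show False using UE by simp
  qed
  then obtain n x0 where "x0 \<in> interior (E n)" by blast
  then obtain r where r: "r > 0" "ball x0 r \<subseteq> E n"
    by (meson open_contains_ball_eq open_interior interior_subset subset_trans)
  have small: "norm (F i y) \<le> 2 * real n" if "norm y < r" for i y
  proof -
    have "x0 + y \<in> E n" "x0 \<in> E n" using r that by (auto simp: dist_norm)
    then have "norm (F i (x0 + y)) \<le> n" "norm (F i x0) \<le> n" unfolding E_def by auto
    moreover have "F i y = F i (x0 + y) - F i x0" using linear_add[OF bounded_linear.linear[OF bl]] by simp
    moreover have "norm (F i y) \<le> norm (F i (x0 + y)) + norm (F i x0)"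
      using calculation(3) norm_triangle_ineq4[of "F i (x0 + y)" "F i x0"] by simp
    ultimately show ?thesis by linarith
  qed
  have "norm (F i x) \<le> (4 * real n / r) * norm x" for i x
  proof (cases "x = 0")
    case True then show ?thesis using linear_0[OF bounded_linear.linear[OF bl]] by simp
  next
    case False
    define y where "y = (r / (2 * norm x)) *\<^sub>R x"
    have ny: "norm y < r" using False r by (simp add: y_def)
    have "F i y = (r / (2 * norm x)) *\<^sub>R F i x" unfolding y_def using linear_scale[OF bounded_linear.linear[OF bl]] by simp
    then have "norm (F i y) = (r / (2 * norm x)) * norm (F i x)" using r by simp
    with small[OF ny, of i] have "(r / (2 * norm x)) * norm (F i x) \<le> 2 * real n" by linarith
    then show ?thesis using False r by (simp add: field_simps)
  qed
  then show ?thesis by blast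
qed


lemma C0_basic:
  assumes "C0_semigroup S"
  shows "blinfun_apply (S 0) x = x"
    and "0 \<le> t \<Longrightarrow> 0 \<le> s \<Longrightarrow> S (t + s) = S t o\<^sub>L S s"
    and "((\<lambda>t. blinfun_apply (S t) x) \<longlongrightarrow> x) (at_right 0)"
  using assms unfolding C0_semigroup_def by auto

lemma C0_local_bound:
  assumes C0: "C0_semigroup S"
  shows "\<exists>d C. d > 0 \<and> (\<forall>t\<in>{0..d}. norm (S t) \<le> C)"
proof (rule ccontr)
  assume "\<not> ?thesis"
  then have "\<forall>n::nat. \<exists>t\<in>{0..1/Suc n}. norm (S t) > real n"
    by (metis (no_types, opaque_lifting) not_le of_nat_0_less_iff zero_less_Suc zero_less_divide_1_iff)
  then obtain t where t: "\<And>n. t n \<in> {0..1/Suc n}" "\<And>n. norm (S (t n)) > real n" by metis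
  have "\<exists>c. \<forall>n. norm (S (t n) x) \<le> c" for x
  proof -
    have "\<forall>\<^sub>F h in at_right 0. dist (blinfun_apply (S h) x) x < 1"
      using C0_basic(3)[OF C0, of x] by (rule tendstoD) simp
    then obtain b where b: "b > 0" "\<And>h. 0 < h \<Longrightarrow> h < b \<Longrightarrow> dist (blinfun_apply (S h) x) x < 1"
      unfolding eventually_at_right_field by auto
    obtain N :: nat where N: "1 / b < N" using reals_Archimedean2 by blast
    have "1 / real (Suc N) < b" using N b by (simp add: field_simps)
    define c where "c = max (norm x + 1) (Max ((\<lambda>n. norm (S (t n) x)) ` {..N}))"
    have "norm (S (t n) x) \<le> c" for n
    proof (cases "n \<le> N")
      case True then show ?thesis unfolding c_def by (auto intro!: max.coboundedI2 Max_ge)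
    next
      case False
      have "t n \<le> 1 / Suc n" using t(1)[of n] by auto
      also have "\<dots> \<le> 1 / Suc N" using False by (simp add: divide_simps)
      finally have tb: "t n < b" using \<open>1 / real (Suc N) < b\<close> by linarith
      show ?thesis
      proof (cases "t n = 0")
        case True then show ?thesis unfolding c_def using C0_basic(1)[OF C0] by simp
      next
        case False
        then have "dist (S (t n) x) x < 1" using b(2)[of "t n"] t(1)[of n] tb by auto
        then have "norm (S (t n) x) \<le> norm x + 1" using norm_triangle_ineq2[of "S (t n) x" x]
          by (simp add: dist_norm)
        then show ?thesis unfolding c_def by simp
      qed
    qed
    then show ?thesis by blast
  qed
  then obtain C where C: "\<forall>n x. norm (S (t n) x) \<le> C * norm x"
    using ubp[of "\<lambda>n. blinfun_apply (S (t n))"] blinfun.bounded_linear_right by blast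
  have nb: "norm (S (t n)) \<le> max C 0" for n
  proof (rule norm_blinfun_bound)
    show "norm (S (t n) x) \<le> max C 0 * norm x" for x
      using C by (meson max.cobounded1 mult_right_mono norm_ge_zero order_trans)
  qed simp
  obtain n :: nat where "max C 0 < n" using reals_Archimedean2 by blast
  then show False using t(2)[of n] nb[of n] by linarith
qed

lemma C0_bound:
  assumes C0: "C0_semigroup S" and L: "L \<ge> 0"
  shows "\<exists>C\<ge>1. \<forall>t\<in>{0..L}. norm (S t) \<le> C"
proof -
  obtain d C0 where d: "d > 0" "\<forall>t\<in>{0..d}. norm (S t) \<le> C0" using C0_local_bound[OF C0] by blast
  define C1 where "C1 = max 1 C0"
  have C1: "C1 \<ge> 1" "\<And>t. t \<in> {0..d} \<Longrightarrow> norm (S t) \<le> C1" using d unfolding C1_def by force+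
  obtain N :: nat where N: "L / d < N" using reals_Archimedean2 by blast
  have Npos: "N > 0" using N L d by (metis divide_nonneg_pos gr0I of_nat_0 order_less_irrefl order_le_less_trans)
  have pow: "norm (S (real k * a)) \<le> C1 ^ k" if a: "a \<in> {0..d}" for a k
  proof (induction k)
    case 0
    have "norm (S 0) \<le> 1" using C0 unfolding C0_semigroup_def by (simp add: norm_blinfun_id_le)
    then show ?case by simp
  next
    case (Suc k)
    have "S (real (Suc k) * a) = S (real k * a) o\<^sub>L S a"
      using C0_basic(2)[OF C0, of "real k * a" a] a by (simp add: algebra_simps)
    then have "norm (S (real (Suc k) * a)) \<le> norm (S (real k * a)) * norm (S a)"
      by (simp add: norm_blinfun_compose)
    also have "\<dots> \<le> C1 ^ k * C1"
      using Suc C1 a by (intro mult_mono) auto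
    finally show ?case by (simp add: mult.commute)
  qed
  have "norm (S t) \<le> C1 ^ N" if t: "t \<in> {0..L}" for t
  proof -
    have "t / N \<le> L / N" using t Npos by (simp add: divide_right_mono)
    also have "\<dots> < d" using N d Npos by (simp add: field_simps)
    finally have "t / N \<in> {0..d}" using t by auto
    from pow[OF this, of N] show ?thesis using Npos by simp
  qed
  moreover have "C1 ^ N \<ge> 1" using C1(1) by simp
  ultimately show ?thesis by blast
qed

lemma semigroup_cont:
  fixes R :: "real \<Rightarrow> 'a::real_normed_vector \<Rightarrow> 'a"
  assumes comp: "\<And>t s x. 0 \<le> t \<Longrightarrow> 0 \<le> s \<Longrightarrow> R (t + s) x = R t (R s x)"
    and lin: "\<And>t. t \<in> {0..L} \<Longrightarrow> linear (R t)"
    and bd: "\<And>t x. t \<in> {0..L} \<Longrightarrow> norm (R t x) \<le> C * norm x"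
    and rc: "((\<lambda>h. R h x) \<longlongrightarrow> x) (at_right 0)"
    and C: "C > 0"
  shows "continuous_on {0..L} (\<lambda>t. R t x)"
  unfolding continuous_on_iff
proof (intro ballI allI impI)
  fix t0 e :: real assume t0: "t0 \<in> {0..L}" and e: "e > 0"
  have "\<forall>\<^sub>F h in at_right 0. dist (R h x) x < e / C"
    using rc by (rule tendstoD) (simp add: e C)
  then obtain b where b: "b > 0" "\<And>h. 0 < h \<Longrightarrow> h < b \<Longrightarrow> dist (R h x) x < e / C"
    unfolding eventually_at_right_field by auto
  show "\<exists>d>0. \<forall>t\<in>{0..L}. dist t t0 < d \<longrightarrow> dist (R t x) (R t0 x) < e"
  proof (intro exI[of _ b] conjI ballI impI)
    show "b > 0" by (rule b(1))
    fix t assume t: "t \<in> {0..L}" and dt: "dist t t0 < b"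
    consider "t = t0" | "t0 < t" | "t < t0" by linarith
    then show "dist (R t x) (R t0 x) < e"
    proof cases
      case 1 then show ?thesis using e by simp
    next
      case 2
      define h where "h = t - t0"
      have h: "0 < h" "h < b" using 2 dt by (auto simp: h_def dist_real_def)
      have "R t x = R t0 (R h x)" using comp[of t0 h x] t0 h by (simp add: h_def)
      then have "R t x - R t0 x = R t0 (R h x - x)" using linear_diff[OF lin[OF t0]] by simp
      then have "norm (R t x - R t0 x) \<le> C * norm (R h x - x)" using bd[OF t0] by simp
      also have "\<dots> < C * (e / C)" using b(2)[OF h] C by (intro mult_strict_left_mono) (auto simp: dist_norm)
      finally show ?thesis using C by (simp add: dist_norm)
    next
      case 3
      define h where "h = t0 - t"
      have h: "0 < h" "h < b" using 3 dt by (auto simp: h_def dist_real_def)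
      have "R t0 x = R t (R h x)" using comp[of t h x] t h by (simp add: h_def)
      then have "R t0 x - R t x = R t (R h x - x)" using linear_diff[OF lin[OF t]] by simp
      then have "norm (R t0 x - R t x) \<le> C * norm (R h x - x)" using bd[OF t] by simp
      also have "\<dots> < C * (e / C)" using b(2)[OF h] C by (intro mult_strict_left_mono) (auto simp: dist_norm)
      finally show ?thesis using C by (simp add: dist_norm norm_minus_commute)
    qed
  qed
qed

lemma semigroup_cont_comp:
  fixes R :: "real \<Rightarrow> 'a::real_normed_vector \<Rightarrow> 'a"
  assumes cont: "\<And>x. continuous_on {0..L} (\<lambda>t. R t x)"
    and lin: "\<And>t. t \<in> {0..L} \<Longrightarrow> linear (R t)"
    and bd: "\<And>t x. t \<in> {0..L} \<Longrightarrow> norm (R t x) \<le> C * norm x"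
    and C: "C > 0"
    and v: "continuous_on {0..L} v"
  shows "continuous_on {0..L} (\<lambda>t. R t (v t))"
  unfolding continuous_on_iff
proof (intro ballI allI impI)
  fix t0 e :: real assume t0: "t0 \<in> {0..L}" and e: "e > 0"
  obtain d1 where d1: "d1 > 0" "\<And>t. t \<in> {0..L} \<Longrightarrow> dist t t0 < d1 \<Longrightarrow> dist (v t) (v t0) < e / 2 / C"
    using v t0 e C unfolding continuous_on_iff by (metis half_gt_zero divide_pos_pos)
  obtain d2 where d2: "d2 > 0" "\<And>t. t \<in> {0..L} \<Longrightarrow> dist t t0 < d2 \<Longrightarrow> dist (R t (v t0)) (R t0 (v t0)) < e / 2"
    using cont[of "v t0"] t0 e unfolding continuous_on_iff by (metis half_gt_zero)
  show "\<exists>d>0. \<forall>t\<in>{0..L}. dist t t0 < d \<longrightarrow> dist (R t (v t)) (R t0 (v t0)) < e"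
  proof (intro exI[of _ "min d1 d2"] conjI ballI impI)
    show "min d1 d2 > 0" using d1 d2 by simp
    fix t assume t: "t \<in> {0..L}" and dt: "dist t t0 < min d1 d2"
    have "R t (v t) - R t0 (v t0) = R t (v t - v t0) + (R t (v t0) - R t0 (v t0))"
      using linear_diff[OF lin[OF t]] by simp
    then have "norm (R t (v t) - R t0 (v t0)) \<le> norm (R t (v t - v t0)) + norm (R t (v t0) - R t0 (v t0))"
      by (metis norm_triangle_ineq)
    also have "\<dots> < C * (e / 2 / C) + e / 2"
    proof (rule add_le_less_mono)
      have "norm (R t (v t - v t0)) \<le> C * norm (v t - v t0)" using bd[OF t] .
      also have "\<dots> \<le> C * (e / 2 / C)" using d1(2)[OF t] dt C by (intro mult_left_mono) (auto simp: dist_norm)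
      finally show "norm (R t (v t - v t0)) \<le> C * (e / 2 / C)" .
      show "norm (R t (v t0) - R t0 (v t0)) < e / 2" using d2(2)[OF t] dt by (simp add: dist_norm)
    qed
    also have "\<dots> = e" using C by simp
    finally show "dist (R t (v t)) (R t0 (v t0)) < e" by (simp add: dist_norm)
  qed
qed

lemma C0_adj_basic:
  fixes S :: "real \<Rightarrow> 'x::{real_inner,complete_space} \<Rightarrow>\<^sub>L 'x"
  assumes C0: "C0_semigroup S"
  shows "blinfun_apply (S t) y \<bullet> z = y \<bullet> adjoint (blinfun_apply (S t)) z"
    and "bounded_linear (adjoint (blinfun_apply (S t)))"
    and "norm (adjoint (blinfun_apply (S t)) z) \<le> norm (S t) * norm z"
    and "0 \<le> t \<Longrightarrow> 0 \<le> s \<Longrightarrow> adjoint (blinfun_apply (S (t + s))) z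
            = adjoint (blinfun_apply (S t)) (adjoint (blinfun_apply (S s)) z)"
proof -
  have bl: "bounded_linear (blinfun_apply (S r))" for r by (rule blinfun.bounded_linear_right)
  note ad = adjoint_prop[OF bl]
  show "blinfun_apply (S t) y \<bullet> z = y \<bullet> adjoint (blinfun_apply (S t)) z" by (rule ad)
  show "bounded_linear (adjoint (blinfun_apply (S t)))" by (rule adjoint_bounded_linear[OF bl])
  show "norm (adjoint (blinfun_apply (S t)) z) \<le> norm (S t) * norm z"
    by (rule adjoint_norm_le[OF bl]) (auto simp: norm_blinfun)
  assume ts: "0 \<le> t" "0 \<le> s"
  show "adjoint (blinfun_apply (S (t + s))) z
            = adjoint (blinfun_apply (S t)) (adjoint (blinfun_apply (S s)) z)"
  proof (rule eq_by_inner)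
    fix y
    have "S (t + s) = S s o\<^sub>L S t" using C0_basic(2)[OF C0, of s t] ts by (simp add: add.commute)
    then have e: "S (t + s) y = S s (S t y)" by simp
    have "y \<bullet> adjoint (blinfun_apply (S (t + s))) z = S (t + s) y \<bullet> z" by (simp only: ad)
    also have "\<dots> = S s (S t y) \<bullet> z" by (simp only: e)
    also have "\<dots> = S t y \<bullet> adjoint (blinfun_apply (S s)) z" by (simp only: ad)
    also have "\<dots> = y \<bullet> adjoint (blinfun_apply (S t)) (adjoint (blinfun_apply (S s)) z)" by (simp only: ad)
    finally show "y \<bullet> adjoint (blinfun_apply (S (t + s))) z
            = y \<bullet> adjoint (blinfun_apply (S t)) (adjoint (blinfun_apply (S s)) z)" .
  qed
qed

lemma C0_strong_cont:
  fixes S :: "real \<Rightarrow> 'x::{real_inner,complete_space} \<Rightarrow>\<^sub>L 'x"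
  assumes C0: "C0_semigroup S" and L: "L \<ge> 0"
  shows "continuous_on {0..L} (\<lambda>t. S t x)"
proof -
  obtain C where C: "C \<ge> 1" "\<forall>t\<in>{0..L}. norm (S t) \<le> C" using C0_bound[OF C0 L] by blast
  show ?thesis
  proof (rule semigroup_cont[where C=C])
    show "S (t + s) y = S t (S s y)" if "0 \<le> t" "0 \<le> s" for t s y
      using C0_basic(2)[OF C0 that] by simp
    show "linear (blinfun_apply (S t))" for t by (simp add: blinfun.bounded_linear_right bounded_linear.linear)
    show "norm (S t y) \<le> C * norm y" if "t \<in> {0..L}" for t y
      using C that by (meson norm_blinfun mult_right_mono norm_ge_zero order_trans)
    show "((\<lambda>h. S h x) \<longlongrightarrow> x) (at_right 0)" by (rule C0_basic(3)[OF C0])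
  qed (use C in auto)
qed


lemma norm_triangle3: "norm (a + b + c) \<le> norm a + norm b + norm (c::'a::real_normed_vector)"
  by (metis add_right_mono norm_triangle_ineq order_trans)

lemma integral_bound_real:
  fixes f :: "real \<Rightarrow> real"
  assumes "f integrable_on {a..b}" "a \<le> b" "\<And>s. s \<in> {a..b} \<Longrightarrow> \<bar>f s\<bar> \<le> K"
  shows "\<bar>integral {a..b} f\<bar> \<le> K * (b - a)"
proof -
  have K: "0 \<le> K" using assms(2) assms(3)[of a] by auto
  have "(f has_integral (integral {a..b} f)) (cbox a b)" using assms(1) by (simp add: has_integral_integral)
  from has_integral_bound[OF K this] assms(2,3) show ?thesis by simp
qed

lemma C0_adj_rc:
  fixes S :: "real \<Rightarrow> 'x::{real_inner,complete_space} \<Rightarrow>\<^sub>L 'x"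
  assumes C0: "C0_semigroup S"
  shows "((\<lambda>h. adjoint (blinfun_apply (S h)) z0) \<longlongrightarrow> z0) (at_right 0)"
proof -
  define Sa where "Sa t = adjoint (blinfun_apply (S t))" for t
  obtain C where C: "C \<ge> 1" "\<forall>t\<in>{0..2}. norm (S t) \<le> C" using C0_bound[OF C0, of 2] by auto
  have ad: "S t y \<bullet> z = y \<bullet> Sa t z" for t y z unfolding Sa_def by (rule C0_adj_basic(1)[OF C0])
  have Sal: "linear (Sa t)" for t unfolding Sa_def using C0_adj_basic(2)[OF C0] bounded_linear.linear by blast
  have Sab: "norm (Sa t z) \<le> C * norm z" if "t \<in> {0..2}" for t z
    using C0_adj_basic(3)[OF C0, of t z] C that unfolding Sa_def by (meson mult_right_mono norm_ge_zero order_trans)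
  have Sb: "norm (S t y) \<le> C * norm y" if "t \<in> {0..2}" for t y
    using C that by (meson norm_blinfun mult_right_mono norm_ge_zero order_trans)
  define Xc where "Xc = {w. ((\<lambda>h. Sa h w) \<longlongrightarrow> w) (at_right 0)}"
  have sub: "subspace Xc"
    unfolding subspace_def Xc_def
    by (auto simp: linear_add[OF Sal] linear_scale[OF Sal] linear_0[OF Sal]
        intro!: tendsto_add tendsto_scaleR tendsto_const)
  have clo: "closed Xc"
  proof -
    have "w \<in> Xc" if w: "w \<in> closure Xc" for w
    proof -
      have "\<forall>\<^sub>F h in at_right 0. dist (Sa h w) w < e" if e: "e > 0" for e
      proof -
        define d where "d = e / (3 * (C + 1))"
        have d: "d > 0" using e C by (simp add: d_def)
        have Cd: "(C + 1) * d = e / 3" using C by (simp add: d_def field_simps)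
        obtain w' where w': "w' \<in> Xc" "dist w' w < d" using w d closure_approachable by blast
        have ev1: "\<forall>\<^sub>F h in at_right 0. dist (Sa h w') w' < e / 3"
          using w'(1) e unfolding Xc_def by (intro tendstoD) auto
        have ev2: "\<forall>\<^sub>F h in at_right (0::real). h \<in> {0..2}"
          unfolding eventually_at_right_field by (intro exI[of _ 1]) auto
        show ?thesis using ev1 ev2
        proof eventually_elim
          case (elim h)
          have "Sa h w - w = Sa h (w - w') + (Sa h w' - w') + (w' - w)" using linear_diff[OF Sal] by simp
          then have "norm (Sa h w - w) \<le> norm (Sa h (w - w')) + norm (Sa h w' - w') + norm (w' - w)"
            using norm_triangle3 by metis
          also have "\<dots> < C * d + e / 3 + d"
          proof -
            have "norm (Sa h (w - w')) \<le> C * norm (w - w')" using Sab elim(2) by blast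
            also have "\<dots> \<le> C * d" using w'(2) C by (intro mult_left_mono) (auto simp: dist_norm norm_minus_commute)
            finally show ?thesis using elim(1) w'(2) by (simp add: dist_norm)
          qed
          also have "\<dots> = e / 3 + e / 3" using Cd by (simp add: algebra_simps)
          finally show ?case using e by (simp add: dist_norm)
        qed
      qed
      then show ?thesis unfolding Xc_def by (simp add: tendsto_iff)
    qed
    then show ?thesis using closure_subset_eq by blast
  qed
  define phi where "phi y s = z0 \<bullet> S s y" for y s
  have phic: "continuous_on {0..2} (phi y)" for y
    unfolding phi_def by (intro continuous_on_inner continuous_on_const C0_strong_cont[OF C0]) auto
  have phiint: "phi y integrable_on {a..b}" if "{a..b} \<subseteq> {0..2}" for y a b
    using integrable_continuous_interval continuous_on_subset[OF phic that] by blast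
  have phib: "\<bar>phi y s\<bar> \<le> C * norm z0 * norm y" if "s \<in> {0..2}" for y s
  proof -
    have "\<bar>phi y s\<bar> \<le> norm z0 * norm (S s y)" unfolding phi_def by (rule Cauchy_Schwarz_ineq2)
    also have "\<dots> \<le> norm z0 * (C * norm y)" by (intro mult_left_mono Sb that) simp
    finally show ?thesis by (simp add: algebra_simps)
  qed
  have phiadd: "phi (a + b) s = phi a s + phi b s" for a b s
    unfolding phi_def by (simp add: blinfun.add_right inner_add_right)
  have phiscale: "phi (c *\<^sub>R a) s = c * phi a s" for c a s
    unfolding phi_def by (simp add: blinfun.scaleR_right)
  have intbd: "\<bar>integral {a..b} (phi y)\<bar> \<le> C * norm z0 * norm y * (b - a)"
    if "0 \<le> a" "a \<le> b" "b \<le> 2" for a b y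
    by (rule integral_bound_real) (use that in \<open>auto intro!: phiint phib\<close>)
  have "\<exists>z. \<forall>y. integral {0..r} (phi y) / r = z \<bullet> y" if r: "r \<in> {0<..1}" for r
  proof (rule riesz, rule bounded_linear_intro[where K="C * norm z0"])
    have sub: "{0..r} \<subseteq> {0..2}" using r by auto
    show "integral {0..r} (phi (a + b)) / r = integral {0..r} (phi a) / r + integral {0..r} (phi b) / r" for a b
      using integral_add[OF phiint[OF sub] phiint[OF sub], of a b] by (simp add: phiadd[abs_def] add_divide_distrib)
    show "integral {0..r} (phi (c *\<^sub>R a)) / r = c *\<^sub>R (integral {0..r} (phi a) / r)" for c a
      by (simp add: phiscale[abs_def])
    show "norm (integral {0..r} (phi y) / r) \<le> norm y * (C * norm z0)" for y
    proof -
      have "\<bar>integral {0..r} (phi y)\<bar> \<le> C * norm z0 * norm y * r" using intbd[of 0 r y] r by auto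
      then show ?thesis using r by (simp add: divide_simps algebra_simps)
    qed
  qed
  then obtain Z where Z: "\<And>r y. r \<in> {0<..1} \<Longrightarrow> integral {0..r} (phi y) / r = Z r \<bullet> y" by metis
  have ZX: "Z r \<in> Xc" if r: "r \<in> {0<..1}" for r
  proof -
    have bnd: "norm (Sa h (Z r) - Z r) \<le> 2 * C * norm z0 / r * h" if h: "h \<in> {0<..1}" for h
    proof -
      have key: "\<bar>(Sa h (Z r) - Z r) \<bullet> y\<bar> \<le> 2 * C * norm z0 / r * h * norm y" for y
      proof -
        have "(Sa h (Z r)) \<bullet> y = Z r \<bullet> S h y" using ad by (simp add: inner_commute)
        also have "\<dots> = integral {0..r} (phi (S h y)) / r" using Z[OF r] by simp
        also have "integral {0..r} (phi (S h y)) = integral {0..r} (phi y \<circ> (+) h)"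
        proof (rule integral_cong)
          fix s assume "s \<in> {0..r}"
          then have "S (s + h) = S s o\<^sub>L S h" using C0_basic(2)[OF C0, of s h] h by auto
          then show "phi (S h y) s = (phi y \<circ> (+) h) s" unfolding phi_def by (simp add: add.commute)
        qed
        also have "\<dots> = integral {h..r+h} (phi y)" using integral_shift_Icc_real[of 0 r "phi y" h] by (simp add: add.commute)
        finally have e1: "Sa h (Z r) \<bullet> y = integral {h..r+h} (phi y) / r" .
        have e2: "Z r \<bullet> y = integral {0..r} (phi y) / r" using Z[OF r] by simp
        have i0: "phi y integrable_on {0..r+h}" using r h by (intro phiint) auto
        have c1: "integral {0..h} (phi y) + integral {h..r+h} (phi y) = integral {0..r+h} (phi y)"
          using Henstock_Kurzweil_Integration.integral_combine[of 0 h "r+h" "phi y"] i0 r h by auto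
        have c2: "integral {0..r} (phi y) + integral {r..r+h} (phi y) = integral {0..r+h} (phi y)"
          using Henstock_Kurzweil_Integration.integral_combine[of 0 r "r+h" "phi y"] i0 r h by auto
        have lin: "integral {h..r+h} (phi y) - integral {0..r} (phi y) = integral {r..r+h} (phi y) - integral {0..h} (phi y)"
          using c1 c2 by linarith
        have "(Sa h (Z r) - Z r) \<bullet> y = (integral {h..r+h} (phi y) - integral {0..r} (phi y)) / r"
          using e1 e2 by (simp add: inner_diff_left diff_divide_distrib)
        then have "(Sa h (Z r) - Z r) \<bullet> y = (integral {r..r+h} (phi y) - integral {0..h} (phi y)) / r"
          using lin by simp
        moreover have "\<bar>integral {r..r+h} (phi y)\<bar> \<le> C * norm z0 * norm y * h"
          using intbd[of r "r+h" y] r h by auto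
        moreover have "\<bar>integral {0..h} (phi y)\<bar> \<le> C * norm z0 * norm y * h"
          using intbd[of 0 h y] h by auto
        ultimately have "\<bar>(Sa h (Z r) - Z r) \<bullet> y\<bar> \<le> (2 * (C * norm z0 * norm y * h)) / r"
          using r by (simp add: abs_div divide_right_mono)
        then show ?thesis by (simp add: algebra_simps)
      qed
      define D where "D = Sa h (Z r) - Z r"
      have "norm D * norm D \<le> 2 * C * norm z0 / r * h * norm D"
        using key[of D] unfolding D_def by (simp add: power2_norm_eq_inner[symmetric] power2_eq_square)
      then have "norm D * norm D \<le> (2 * C * norm z0 / r * h) * norm D" by (simp add: algebra_simps)
      then have "norm D \<le> 2 * C * norm z0 / r * h"
      proof (cases "norm D = 0")
        case True then show ?thesis using C r h by simp
      next
        case False then have "norm D > 0" by simp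
        with \<open>norm D * norm D \<le> (2 * C * norm z0 / r * h) * norm D\<close> show ?thesis
          by (metis mult_right_le_imp_le)
      qed
      then show ?thesis unfolding D_def .
    qed
    have "((\<lambda>h. Sa h (Z r) - Z r) \<longlongrightarrow> 0) (at_right 0)"
    proof (rule Lim_null_comparison)
      show "\<forall>\<^sub>F h in at_right 0. norm (Sa h (Z r) - Z r) \<le> 2 * C * norm z0 / r * h"
        unfolding eventually_at_right_field
      proof (intro exI[of _ 1] conjI allI impI)
        fix h :: real assume "0 < h" "h < 1"
        then show "norm (Sa h (Z r) - Z r) \<le> 2 * C * norm z0 / r * h" by (intro bnd) auto
      qed simp
      show "((\<lambda>h. 2 * C * norm z0 / r * h) \<longlongrightarrow> 0) (at_right 0)"
        by (rule tendsto_mult_right_zero) (simp add: tendsto_ident_at)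
    qed
    then show ?thesis unfolding Xc_def using Lim_null by blast
  qed
  obtain p where p: "p \<in> Xc" "\<forall>v\<in>Xc. (z0 - p) \<bullet> v = 0" using proj_closed_subspace[OF sub clo] by blast
  define q where "q = z0 - p"
  have lim: "((\<lambda>r. Z r \<bullet> q) \<longlongrightarrow> z0 \<bullet> q) (at_right 0)"
    unfolding tendsto_iff
  proof (intro allI impI)
    fix e :: real assume e: "e > 0"
    have "phi q 0 = z0 \<bullet> q" unfolding phi_def using C0_basic(1)[OF C0] by simp
    obtain d where d: "d > 0" "\<And>s. s \<in> {0..2} \<Longrightarrow> dist s 0 < d \<Longrightarrow> dist (phi q s) (phi q 0) < e / 2"
      using phic[of q] e unfolding continuous_on_iff by (metis atLeastAtMost_iff half_gt_zero order_refl zero_le_numeral)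
    show "\<forall>\<^sub>F r in at_right 0. dist (Z r \<bullet> q) (z0 \<bullet> q) < e"
      unfolding eventually_at_right_field
    proof (intro exI[of _ "min d 1"] conjI allI impI)
      show "0 < min d (1::real)" using d by simp
      fix r :: real assume r: "0 < r" "r < min d 1"
      then have rr: "r \<in> {0<..1}" by auto
      have "Z r \<bullet> q - z0 \<bullet> q = integral {0..r} (phi q) / r - phi q 0"
        using Z[OF rr] \<open>phi q 0 = z0 \<bullet> q\<close> by simp
      also have "\<dots> = integral {0..r} (\<lambda>s. phi q s - phi q 0) / r"
      proof -
        have "integral {0..r} (\<lambda>s. phi q s - phi q 0) = integral {0..r} (phi q) - integral {0..r} (\<lambda>s. phi q 0)"
          by (rule integral_diff) (use rr in \<open>auto intro!: phiint\<close>)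
        then show ?thesis using rr by (simp add: diff_divide_distrib)
      qed
      finally have eq: "Z r \<bullet> q - z0 \<bullet> q = integral {0..r} (\<lambda>s. phi q s - phi q 0) / r" .
      have "\<bar>integral {0..r} (\<lambda>s. phi q s - phi q 0)\<bar> \<le> e / 2 * (r - 0)"
      proof (rule integral_bound_real)
        show "(\<lambda>s. phi q s - phi q 0) integrable_on {0..r}"
          by (intro integrable_diff integrable_const_ivl phiint) (use rr in auto)
        show "\<bar>phi q s - phi q 0\<bar> \<le> e / 2" if "s \<in> {0..r}" for s
          using d(2)[of s] that r by (auto simp: dist_real_def)
      qed (use r in auto)
      moreover have "\<bar>Z r \<bullet> q - z0 \<bullet> q\<bar> = \<bar>integral {0..r} (\<lambda>s. phi q s - phi q 0)\<bar> / r"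
        using r by (simp only: eq abs_divide)
      ultimately have "\<bar>Z r \<bullet> q - z0 \<bullet> q\<bar> \<le> e / 2 * (r - 0) / r"
        using r by (metis divide_right_mono less_eq_real_def)
      then have "\<bar>Z r \<bullet> q - z0 \<bullet> q\<bar> \<le> e / 2" using r by simp
      then show "dist (Z r \<bullet> q) (z0 \<bullet> q) < e" using e by (simp add: dist_real_def)
    qed
  qed
  have "\<forall>\<^sub>F r in at_right 0. Z r \<bullet> q = 0"
    unfolding eventually_at_right_field
    by (intro exI[of _ 1]) (use p ZX in \<open>auto simp: q_def inner_commute\<close>)
  then have "((\<lambda>r. Z r \<bullet> q) \<longlongrightarrow> 0) (at_right (0::real))"
    by (rule tendsto_eventually)
  then have "z0 \<bullet> q = 0" using lim tendsto_unique trivial_limit_at_right_real by blast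
  moreover have "p \<bullet> q = 0" using p unfolding q_def by (simp add: inner_commute)
  ultimately have "q \<bullet> q = 0" unfolding q_def by (simp add: inner_diff_left inner_diff_right inner_commute)
  then have "z0 = p" unfolding q_def by simp
  then have "z0 \<in> Xc" using p by simp
  then show ?thesis unfolding Xc_def Sa_def by simp
qed

locale gsys =
  fixes S :: "real \<Rightarrow> 'x::{real_inner,complete_space} \<Rightarrow>\<^sub>L 'x"
    and B :: "'u::{real_inner,complete_space} \<Rightarrow>\<^sub>L 'x"
    and T :: real
  assumes C0: "C0_semigroup S" and Tpos: "T > 0"
begin

definition Sa :: "real \<Rightarrow> 'x \<Rightarrow> 'x" where "Sa t = adjoint (blinfun_apply (S t))"
definition Bs :: "'x \<Rightarrow> 'u" where "Bs = adjoint (blinfun_apply B)"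
definition w :: "'x \<Rightarrow> real \<Rightarrow> 'u" where "w x s = Bs (Sa (T - s) x)"

lemma ad_S: "S t y \<bullet> z = y \<bullet> Sa t z"
  unfolding Sa_def by (rule C0_adj_basic(1)[OF C0])

lemma ad_B: "B u \<bullet> z = u \<bullet> Bs z"
  unfolding Bs_def by (rule adjoint_prop[OF blinfun.bounded_linear_right])

lemma Sa_bl: "bounded_linear (Sa t)"
  unfolding Sa_def by (rule C0_adj_basic(2)[OF C0])

lemma Bs_bl: "bounded_linear Bs"
  unfolding Bs_def by (rule adjoint_bounded_linear[OF blinfun.bounded_linear_right])

lemma Bs_norm: "norm (Bs z) \<le> norm B * norm z"
  unfolding Bs_def by (rule adjoint_norm_le[OF blinfun.bounded_linear_right]) (auto simp: norm_blinfun)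

lemma bound: "\<exists>C\<ge>1. \<forall>t\<in>{0..T}. norm (S t) \<le> C"
  using C0_bound[OF C0] Tpos by simp

lemma Sa_cont: "continuous_on {0..T} (\<lambda>t. Sa t x)"
proof -
  obtain C where C: "C \<ge> 1" "\<forall>t\<in>{0..T}. norm (S t) \<le> C" using bound by blast
  show ?thesis
  proof (rule semigroup_cont[where C=C])
    show "Sa (t + s) y = Sa t (Sa s y)" if "0 \<le> t" "0 \<le> s" for t s y
      unfolding Sa_def by (rule C0_adj_basic(4)[OF C0 that])
    show "linear (Sa t)" for t using Sa_bl bounded_linear.linear by blast
    show "norm (Sa t y) \<le> C * norm y" if "t \<in> {0..T}" for t y
      using C0_adj_basic(3)[OF C0, of t y] C that unfolding Sa_def by (meson mult_right_mono norm_ge_zero order_trans)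
    show "((\<lambda>h. Sa h x) \<longlongrightarrow> x) (at_right 0)" unfolding Sa_def by (rule C0_adj_rc[OF C0])
  qed (use C in auto)
qed

lemma S_cont: "continuous_on {0..T} (\<lambda>t. S t x)"
  using C0_strong_cont[OF C0] Tpos by simp

lemma flip_cont:
  assumes "continuous_on {0..T} f" shows "continuous_on {0..T} (\<lambda>s. f (T - s))"
proof -
  have "continuous_on {0..T} (\<lambda>s. T - s)" by (intro continuous_intros)
  moreover have "(\<lambda>s. T - s) ` {0..T} \<subseteq> {0..T}" by auto
  ultimately show ?thesis using continuous_on_compose2[OF assms] by blast
qed

lemma w_cont: "continuous_on {0..T} (w x)"
proof -
  have "continuous_on {0..T} (\<lambda>s. Sa (T - s) x)" by (rule flip_cont[OF Sa_cont])
  have c2: "continuous_on UNIV Bs" by (rule linear_continuous_on[OF Bs_bl])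
  show ?thesis unfolding w_def using continuous_on_compose2[OF c2 \<open>continuous_on {0..T} (\<lambda>s. Sa (T - s) x)\<close> subset_UNIV] .
qed

lemma g_cont: "continuous_on {0..T} (\<lambda>s. S (T - s) (B (w x s)))"
proof -
  obtain C where C: "C \<ge> 1" "\<forall>t\<in>{0..T}. norm (S t) \<le> C" using bound by blast
  have "continuous_on {0..T} (\<lambda>t. S t (B (Bs (Sa t x))))"
  proof (rule semigroup_cont_comp[where C=C and R="\<lambda>t. blinfun_apply (S t)" and v="\<lambda>t. B (Bs (Sa t x))" and L=T])
    show "continuous_on {0..T} (\<lambda>t. S t y)" for y by (rule S_cont)
    show "linear (blinfun_apply (S t))" for t by (simp add: blinfun.bounded_linear_right bounded_linear.linear)
    show "norm (S t y) \<le> C * norm y" if "t \<in> {0..T}" for t y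
      using C that by (meson norm_blinfun mult_right_mono norm_ge_zero order_trans)
    show "continuous_on {0..T} (\<lambda>t. B (Bs (Sa t x)))"
    proof -
      have c2: "continuous_on UNIV Bs" by (rule linear_continuous_on[OF Bs_bl])
      have c3: "continuous_on UNIV (blinfun_apply B)" by (rule linear_continuous_on[OF blinfun.bounded_linear_right])
      have "continuous_on {0..T} (\<lambda>t. Bs (Sa t x))" using continuous_on_compose2[OF c2 Sa_cont subset_UNIV] .
      from continuous_on_compose2[OF c3 this subset_UNIV] show ?thesis .
    qed
  qed (use C in auto)
  from flip_cont[OF this] show ?thesis unfolding w_def .
qed

lemma gram_eq: "gramian S B T x = integral {0..T} (\<lambda>s. S (T - s) (B (w x s)))"
  unfolding gramian_def w_def Sa_def Bs_def ..

lemma g_int: "(\<lambda>s. S (T - s) (B (w x s))) integrable_on {0..T}"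
  by (rule integrable_continuous_hilbert[OF g_cont])

lemma ww_cont: "continuous_on {0..T} (\<lambda>s. w x s \<bullet> w y s)"
  by (intro continuous_on_inner w_cont)

lemma ww_int: "(\<lambda>s. w x s \<bullet> w y s) integrable_on {0..T}"
  by (rule integrable_continuous_interval[OF ww_cont])

lemma gram_inner: "gramian S B T x \<bullet> y = integral {0..T} (\<lambda>s. w x s \<bullet> w y s)"
proof -
  have "gramian S B T x \<bullet> y = integral {0..T} ((\<lambda>v. v \<bullet> y) \<circ> (\<lambda>s. S (T - s) (B (w x s))))"
    unfolding gram_eq by (rule integral_linear[OF g_int bounded_linear_inner_left, symmetric])
  also have "\<dots> = integral {0..T} (\<lambda>s. w x s \<bullet> w y s)"
    by (rule integral_cong) (simp add: ad_S ad_B w_def)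
  finally show ?thesis .
qed

lemma w_lin: "w (a + b) s = w a s + w b s" "w (c *\<^sub>R a) s = c *\<^sub>R w a s"
  unfolding w_def using Sa_bl Bs_bl
  by (simp_all add: linear_add linear_scale bounded_linear.linear)

lemma gram_add: "gramian S B T (a + b) = gramian S B T a + gramian S B T b"
proof (rule eq_by_inner)
  fix y
  have "y \<bullet> gramian S B T (a + b) = integral {0..T} (\<lambda>s. w a s \<bullet> w y s + w b s \<bullet> w y s)"
    by (simp add: inner_commute[of y] gram_inner w_lin inner_add_left)
  also have "\<dots> = y \<bullet> (gramian S B T a + gramian S B T b)"
    by (simp add: integral_add ww_int inner_add_right inner_commute[of y] gram_inner)
  finally show "y \<bullet> gramian S B T (a + b) = y \<bullet> (gramian S B T a + gramian S B T b)" .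
qed

lemma gram_scale: "gramian S B T (c *\<^sub>R a) = c *\<^sub>R gramian S B T a"
proof (rule eq_by_inner)
  fix y
  show "y \<bullet> gramian S B T (c *\<^sub>R a) = y \<bullet> (c *\<^sub>R gramian S B T a)"
    by (simp add: inner_commute[of y] gram_inner w_lin)
qed

lemma gram_sym: "gramian S B T x \<bullet> y = x \<bullet> gramian S B T y"
  by (simp add: gram_inner inner_commute[of x] inner_commute[of "w x s" for s])

lemma gram_psd: "gramian S B T x \<bullet> x \<ge> 0"
  unfolding gram_inner by (rule integral_nonneg[OF ww_int]) simp

lemma gram_zero:
  assumes "gramian S B T x \<bullet> x = 0" and s: "s \<in> {0..T}"
  shows "w x s = 0"
proof -
  have "w x s \<bullet> w x s = 0"
  proof (rule has_integral_0_cbox_imp_0[where f="\<lambda>s. w x s \<bullet> w x s" and a=0 and b=T and x=s])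
    show "continuous_on (cbox 0 T) (\<lambda>s. w x s \<bullet> w x s)" using ww_cont by simp
    show "((\<lambda>s. w x s \<bullet> w x s) has_integral 0) (cbox 0 T)"
      using assms(1) ww_int[of x x] unfolding gram_inner by (simp add: has_integral_integral)
    show "box 0 T \<noteq> {}" using Tpos by simp
  qed (use s in auto)
  then show ?thesis by simp
qed

lemma gram_bounded: "\<exists>K. \<forall>x. norm (gramian S B T x) \<le> K * norm x"
proof -
  obtain C where C: "C \<ge> 1" "\<forall>t\<in>{0..T}. norm (S t) \<le> C" using bound by blast
  define K where "K = norm B * C"
  have K: "K \<ge> 0" using C unfolding K_def by simp
  have wb: "norm (w x s) \<le> K * norm x" if "s \<in> {0..T}" for x s
  proof -
    have "norm (Sa (T - s) x) \<le> C * norm x"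
    proof -
      have "T - s \<in> {0..T}" using that by auto
      then have "norm (S (T - s)) \<le> C" using C by blast
      then have "norm (S (T - s)) * norm x \<le> C * norm x" by (simp add: mult_right_mono)
      with C0_adj_basic(3)[OF C0, of "T - s" x] show ?thesis unfolding Sa_def by linarith
    qed
    then have "norm B * norm (Sa (T - s) x) \<le> norm B * (C * norm x)" by (simp add: mult_left_mono)
    then show ?thesis unfolding w_def K_def using Bs_norm[of "Sa (T - s) x"] by (simp add: algebra_simps)
  qed
  have "norm (gramian S B T x) \<le> (K * K * T) * norm x" for x
  proof -
    let ?G = "gramian S B T x"
    have "\<bar>integral {0..T} (\<lambda>s. w x s \<bullet> w ?G s)\<bar> \<le> (K * norm x * (K * norm ?G)) * (T - 0)"
    proof (rule integral_bound_real[OF ww_int])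
      show "\<bar>w x s \<bullet> w ?G s\<bar> \<le> K * norm x * (K * norm ?G)" if "s \<in> {0..T}" for s
      proof -
        have "\<bar>w x s \<bullet> w ?G s\<bar> \<le> norm (w x s) * norm (w ?G s)" by (rule Cauchy_Schwarz_ineq2)
        also have "\<dots> \<le> K * norm x * (K * norm ?G)"
          by (rule mult_mono[OF wb[OF that, of x] wb[OF that, of ?G]]) (use K in auto)
        finally show ?thesis .
      qed
    qed (use Tpos in auto)
    have "norm ?G * norm ?G = ?G \<bullet> ?G" by (metis power2_norm_eq_inner power2_eq_square)
    also have "\<dots> = integral {0..T} (\<lambda>s. w x s \<bullet> w ?G s)" by (rule gram_inner)
    also have "\<dots> \<le> \<bar>integral {0..T} (\<lambda>s. w x s \<bullet> w ?G s)\<bar>" by (rule abs_ge_self)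
    also note \<open>\<bar>integral {0..T} (\<lambda>s. w x s \<bullet> w ?G s)\<bar> \<le> (K * norm x * (K * norm ?G)) * (T - 0)\<close>
    also have "(K * norm x * (K * norm ?G)) * (T - 0) = (K * K * T * norm x) * norm ?G" by (simp add: algebra_simps)
    finally have "norm ?G * norm ?G \<le> (K * K * T * norm x) * norm ?G" .
    then show ?thesis
    proof (cases "norm ?G = 0")
      case True then show ?thesis using K Tpos by simp
    next
      case False then have "norm ?G > 0" by simp
      with \<open>norm ?G * norm ?G \<le> (K * K * T * norm x) * norm ?G\<close> show ?thesis
        by (metis mult_right_le_imp_le)
    qed
  qed
  then show ?thesis by blast
qed

lemma gram_bl: "bounded_linear (gramian S B T)"
proof -
  obtain K where K: "\<forall>x. norm (gramian S B T x) \<le> K * norm x" using gram_bounded by blast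
  show ?thesis
    by (rule bounded_linear_intro[where K=K]) (use K gram_add gram_scale in \<open>auto simp: mult.commute\<close>)
qed

end

lemma orthonormal_basis_span:
  fixes F :: "'a::real_inner set"
  assumes "finite F"
  obtains E where "finite E" "span E = span F" "\<And>e. e \<in> E \<Longrightarrow> norm e = 1"
    "\<And>e e'. e \<in> E \<Longrightarrow> e' \<in> E \<Longrightarrow> e \<noteq> e' \<Longrightarrow> e \<bullet> e' = 0"
proof -
  obtain C where C: "finite C" "span C = span F" "pairwise orthogonal C" using basis_orthogonal[OF assms] by blast
  define E where "E = (\<lambda>c. c /\<^sub>R norm c) ` (C - {0})"
  have fE: "finite E" using C unfolding E_def by simp
  have nE: "norm e = 1" if "e \<in> E" for e using that unfolding E_def by (auto simp: sgn_div_norm[symmetric] norm_sgn split: if_splits)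
  have oE: "e \<bullet> e' = 0" if a: "e \<in> E" "e' \<in> E" "e \<noteq> e'" for e e'
  proof -
    obtain c c' where c: "c \<in> C" "c \<noteq> 0" "e = c /\<^sub>R norm c" "c' \<in> C" "c' \<noteq> 0" "e' = c' /\<^sub>R norm c'"
      using a(1,2) unfolding E_def by auto
    then have "c \<noteq> c'" using a(3) by auto
    then have "c \<bullet> c' = 0" using C(3) c unfolding pairwise_def orthogonal_def by blast
    then show ?thesis using c by simp
  qed
  have "span E = span C"
    unfolding span_eq
  proof
    show "E \<subseteq> span C" unfolding E_def by (auto intro: span_scale span_base)
    show "C \<subseteq> span E"
    proof
      fix c assume c: "c \<in> C"
      show "c \<in> span E"
      proof (cases "c = 0")
        case True then show ?thesis by (simp add: span_zero)
      next
        case False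
        then have "c /\<^sub>R norm c \<in> E" using c unfolding E_def by auto
        then have "norm c *\<^sub>R (c /\<^sub>R norm c) \<in> span E" by (intro span_scale span_base)
        then show ?thesis using False by simp
      qed
    qed
  qed
  then show ?thesis using that fE nE oE C(2) by auto
qed

locale onb =
  fixes E :: "'a::real_inner set" and M :: "'a set"
  assumes fE: "finite E" and ME: "M = span E" and nE: "\<And>e. e \<in> E \<Longrightarrow> norm e = 1"
    and oE: "\<And>e e'. e \<in> E \<Longrightarrow> e' \<in> E \<Longrightarrow> e \<noteq> e' \<Longrightarrow> e \<bullet> e' = 0"
begin

definition P :: "'a \<Rightarrow> 'a" where "P x = (\<Sum>e\<in>E. (x \<bullet> e) *\<^sub>R e)"

lemma P_in: "P x \<in> M"
  unfolding P_def ME by (intro span_sum span_scale span_base)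

lemma P_inner_E: "P x \<bullet> e' = x \<bullet> e'" if "e' \<in> E"
proof -
  have "P x \<bullet> e' = (\<Sum>e\<in>E. (x \<bullet> e) * (e \<bullet> e'))" unfolding P_def by (simp add: inner_sum_left)
  also have "\<dots> = (\<Sum>e\<in>{e'}. (x \<bullet> e) * (e \<bullet> e'))"
    by (rule sum.mono_neutral_right) (use fE that oE in auto)
  also have "\<dots> = x \<bullet> e'" using nE[OF that] by (simp add: dot_square_norm)
  finally show ?thesis .
qed

lemma P_orth: "(x - P x) \<bullet> v = 0" if "v \<in> M" for x v
proof -
  have "orthogonal (x - P x) v"
    by (rule orthogonal_to_span[of v E, unfolded orthogonal_commute[of v]])
       (use that ME P_inner_E in \<open>auto simp: orthogonal_def inner_diff_left orthogonal_commute\<close>)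
  then show ?thesis by (simp add: orthogonal_def)
qed

lemma orth_proj_eq: "orth_proj M x = P x"
  unfolding orth_proj_def
proof (rule the_equality)
  show "P x \<in> M \<and> (\<forall>v\<in>M. (x - P x) \<bullet> v = 0)" using P_in P_orth by blast
  fix m assume m: "m \<in> M \<and> (\<forall>v\<in>M. (x - m) \<bullet> v = 0)"
  have d: "P x - m \<in> M" using m P_in ME by (simp add: span_diff)
  have "(x - m) \<bullet> (P x - m) = 0" "(x - P x) \<bullet> (P x - m) = 0" using m d P_orth by auto
  then have "(P x - m) \<bullet> (P x - m) = 0" by (simp add: inner_diff_left inner_diff_right algebra_simps)
  then show "m = P x" by simp
qed

lemma P_linear: "linear P"
  unfolding P_def by (rule linearI) (simp_all add: inner_add_left scaleR_add_left sum.distrib scaleR_sum_right)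

lemma P_M: "m \<in> M \<Longrightarrow> P m = m"
proof -
  assume m: "m \<in> M"
  have "(m - P m) \<bullet> (m - P m) = 0" using P_orth[of "m - P m" m] m P_in ME by (simp add: span_diff)
  then show ?thesis by simp
qed

lemma P_idem: "P (P x) = P x" using P_M P_in by blast

lemma P_pyth: "(norm x)\<^sup>2 = (norm (P x))\<^sup>2 + (norm (x - P x))\<^sup>2"
proof -
  define r where "r = x - P x"
  have o: "r \<bullet> P x = 0" unfolding r_def using P_orth P_in by blast
  have x: "x = P x + r" unfolding r_def by simp
  have "x \<bullet> x = P x \<bullet> P x + r \<bullet> r"
    by (subst (1 2) x) (simp add: inner_add_left inner_add_right inner_commute[of "P x" r] o)
  then show ?thesis unfolding r_def by (simp add: power2_norm_eq_inner)
qed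

lemma P_res_le: "norm (x - P x) \<le> norm x"
  using P_pyth[of x] by (metis add_le_cancel_right le_add_same_cancel2 norm_ge_zero power2_le_imp_le zero_le_power2)

lemma P_res_inner: "(x - P x) \<bullet> x = (norm (x - P x))\<^sup>2"
proof -
  have o: "(x - P x) \<bullet> P x = 0" using P_orth P_in by blast
  have "(x - P x) \<bullet> x = (x - P x) \<bullet> (x - P x) + (x - P x) \<bullet> P x" by (simp add: inner_diff_right)
  then show ?thesis using o by (simp add: power2_norm_eq_inner)
qed

lemma lin_P_bound:
  fixes Q :: "'a \<Rightarrow> 'b::real_normed_vector"
  assumes "linear Q"
  shows "norm (Q (P v)) \<le> norm v * (\<Sum>e\<in>E. norm (Q e))"
proof -
  have "Q (P v) = (\<Sum>e\<in>E. (v \<bullet> e) *\<^sub>R Q e)"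
    unfolding P_def using assms by (simp add: linear_sum linear_scale)
  then have "norm (Q (P v)) = norm (\<Sum>e\<in>E. (v \<bullet> e) *\<^sub>R Q e)" by simp
  also have "\<dots> \<le> (\<Sum>e\<in>E. norm ((v \<bullet> e) *\<^sub>R Q e))" by (rule norm_sum)
  also have "\<dots> \<le> (\<Sum>e\<in>E. norm v * norm (Q e))"
  proof (rule sum_mono)
    fix e assume e: "e \<in> E"
    have "\<bar>v \<bullet> e\<bar> \<le> norm v" using Cauchy_Schwarz_ineq2[of v e] nE[OF e] by simp
    then show "norm ((v \<bullet> e) *\<^sub>R Q e) \<le> norm v * norm (Q e)" by (simp add: mult_right_mono)
  qed
  finally show ?thesis by (simp add: sum_distrib_left)
qed

end

lemma borel_in_lebesgue: "A \<in> sets borel \<Longrightarrow> A \<in> sets lebesgue"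
  by (metis sets_completionI_sets sets_lborel)

lemma cont_L2:
  fixes u :: "real \<Rightarrow> 'u::real_normed_vector"
  assumes u: "continuous_on {0..T} u" and T: "T > 0"
  shows "u \<in> L2_controls T"
proof -
  have int: "integrable (lebesgue_on {0..T}) (\<lambda>s. (norm (u s))\<^sup>2)"
    by (rule continuous_imp_integrable_real) (intro continuous_intros u)
  define k where "k n s = min (Suc n) (nat \<lfloor>real (Suc n) * s / T\<rfloor>)" for n s
  define f where "f n s = u (T * real (k n s) / real (Suc n))" for n s
  have fin: "finite (range (f n))" for n
  proof -
    have "range (f n) \<subseteq> (\<lambda>j. u (T * real j / real (Suc n))) ` {..Suc n}"
      unfolding f_def k_def by auto
    then show ?thesis by (rule finite_subset) simp
  qed
  have meas: "f n -` {v} \<inter> {0..T} \<in> sets lebesgue" for n v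
  proof -
    define g where "g s = min (real (Suc n)) (max 0 (real_of_int \<lfloor>real (Suc n) * s / T\<rfloor>))" for s
    have gk: "g s = real (k n s)" for s unfolding g_def k_def by (simp add: of_nat_min)
    have gm: "g \<in> borel_measurable borel" unfolding g_def by measurable
    define A where "A = real ` {j. j \<le> Suc n \<and> u (T * real j / real (Suc n)) = v}"
    have "closed A" unfolding A_def by (intro finite_imp_closed) auto
    then have "A \<in> sets borel" by simp
    then have "g -` A \<inter> space borel \<in> sets borel" using measurable_sets[OF gm] by blast
    then have "g -` A \<in> sets lebesgue" by (simp add: borel_in_lebesgue)
    moreover have "f n -` {v} = g -` A"
    proof -
      have "k n s \<le> Suc n" for s unfolding k_def by simp
      then show ?thesis unfolding f_def A_def gk by force
    qed
    ultimately show ?thesis by auto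
  qed
  have conv: "(\<lambda>n. f n s) \<longlonglongrightarrow> u s" if s: "s \<in> {0..T}" for s
  proof -
    define t where "t n = T * real (k n s) / real (Suc n)" for n
    have tb: "t n \<in> {0..T} \<and> norm (t n - s) \<le> T / real (Suc n)" for n
    proof -
      define y where "y = real (Suc n) * s / T"
      have y0: "0 \<le> y" using s T unfolding y_def by simp
      have "real (Suc n) * s \<le> real (Suc n) * T" using s by (intro mult_left_mono) auto
      then have yN: "y \<le> real (Suc n)" using T unfolding y_def by (simp add: divide_le_eq)
      have fl: "real_of_int \<lfloor>y\<rfloor> \<le> y" "y < real_of_int \<lfloor>y\<rfloor> + 1" by linarith+
      have f0: "0 \<le> \<lfloor>y\<rfloor>" using y0 by simp
      have "nat \<lfloor>y\<rfloor> \<le> Suc n" using yN fl f0 by linarith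
      then have kk: "real (k n s) = real_of_int \<lfloor>y\<rfloor>" unfolding k_def y_def[symmetric] using f0 by simp
      have "t n = T * real_of_int \<lfloor>y\<rfloor> / real (Suc n)" unfolding t_def kk ..
      moreover have "s = T * y / real (Suc n)" unfolding y_def using T by (simp del: of_nat_Suc)
      ultimately have "s - t n = T * (y - real_of_int \<lfloor>y\<rfloor>) / real (Suc n)" by (simp add: field_simps)
      moreover have "0 \<le> y - real_of_int \<lfloor>y\<rfloor>" "y - real_of_int \<lfloor>y\<rfloor> < 1" using fl by linarith+
      ultimately have d: "0 \<le> s - t n" "s - t n \<le> T / real (Suc n)"
        using T by (auto simp: divide_right_mono mult_left_le)
      have "0 \<le> t n" unfolding t_def using T by simp
      then show ?thesis using d s by (auto simp: abs_if)
    qed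
    have "(\<lambda>n. t n - s) \<longlonglongrightarrow> 0"
    proof (rule Lim_null_comparison)
      show "\<forall>\<^sub>F n in sequentially. norm (t n - s) \<le> T / real (Suc n)" using tb by simp
      show "(\<lambda>n. T / real (Suc n)) \<longlonglongrightarrow> 0"
        using tendsto_mult_right_zero[OF LIMSEQ_inverse_real_of_nat, of T] by (simp add: divide_inverse)
    qed
    then have "t \<longlonglongrightarrow> s" using Lim_null by blast
    then have "(u \<circ> t) \<longlonglongrightarrow> u s" using u s tb unfolding continuous_on_sequentially by blast
    then show ?thesis unfolding f_def t_def o_def .
  qed
  have sm: "strongly_measurable_on {0..T} u"
    unfolding strongly_measurable_on_def
  proof (intro exI[of _ f] conjI allI)
    show "finite (range (f n))" for n by (rule fin)
    show "f n -` {v} \<inter> {0..T} \<in> sets lebesgue" for n v by (rule meas)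
    show "AE s in lebesgue_on {0..T}. (\<lambda>n. f n s) \<longlonglongrightarrow> u s"
      by (rule AE_I2) (simp add: conv)
  qed
  show ?thesis unfolding L2_controls_def using sm int by blast
qed

lemma subspace_closure_rv:
  fixes S :: "'a::real_normed_vector set"
  assumes "subspace S" shows "subspace (closure S)"
  unfolding subspace_def
proof (intro conjI ballI allI)
  show "0 \<in> closure S" using assms closure_subset subspace_0 by blast
  fix x y assume x: "x \<in> closure S" and y: "y \<in> closure S"
  obtain f where f: "\<forall>n. f n \<in> S" "f \<longlonglongrightarrow> x" using x unfolding closure_sequential by blast
  obtain g where g: "\<forall>n. g n \<in> S" "g \<longlonglongrightarrow> y" using y unfolding closure_sequential by blast
  have "\<forall>n. f n + g n \<in> S" using f g assms subspace_add by blast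
  moreover have "(\<lambda>n. f n + g n) \<longlonglongrightarrow> x + y" using f g by (intro tendsto_add)
  ultimately show "x + y \<in> closure S" unfolding closure_sequential by (intro exI[of _ "\<lambda>n. f n + g n"]) simp
next
  fix c x assume x: "x \<in> closure S"
  obtain f where f: "\<forall>n. f n \<in> S" "f \<longlonglongrightarrow> x" using x unfolding closure_sequential by blast
  have "\<forall>n. c *\<^sub>R f n \<in> S" using f assms subspace_scale by blast
  moreover have "(\<lambda>n. c *\<^sub>R f n) \<longlonglongrightarrow> c *\<^sub>R x" using f by (intro tendsto_scaleR tendsto_const)
  ultimately show "c *\<^sub>R x \<in> closure S" unfolding closure_sequential by (intro exI[of _ "\<lambda>n. c *\<^sub>R f n"]) simp
qed

lemma const_tendsto_at_right:
  fixes x :: "'a::real_normed_vector"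
  assumes "\<forall>\<^sub>F e in at_right (0::real). f e = x" "(f \<longlongrightarrow> 0) (at_right 0)"
  shows "x = 0"
proof -
  have "((\<lambda>e. x) \<longlongrightarrow> 0) (at_right (0::real))"
    using assms(2) by (rule tendsto_cong[THEN iffD1, rotated]) (use assms(1) in \<open>auto elim: eventually_mono\<close>)
  then show ?thesis using tendsto_unique[OF trivial_limit_at_right_real tendsto_const] by blast
qed

locale psdop =
  fixes G :: "'a::{real_inner,complete_space} \<Rightarrow> 'a"
  assumes bl: "bounded_linear G" and sym: "\<And>x y. G x \<bullet> y = x \<bullet> G y" and psd: "\<And>x. G x \<bullet> x \<ge> 0"
begin

lemma lin: "linear G" using bl bounded_linear.linear by blast

lemma zero_form:
  assumes "G x \<bullet> x = 0" shows "G x = 0"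
proof (rule ccontr)
  assume nz: "G x \<noteq> 0"
  define y where "y = G x"
  define c where "c = G x \<bullet> y"
  have c0: "c > 0" using nz unfolding c_def y_def by simp
  define a where "a = G y \<bullet> y"
  have a0: "a \<ge> 0" unfolding a_def by (rule psd)
  define s where "s = c / (a + 1)"
  have s0: "s > 0" using c0 a0 unfolding s_def by simp
  have Gyx: "G y \<bullet> x = c" using sym[of y x] unfolding c_def by (simp add: inner_commute)
  have lin_eq: "G (x - s *\<^sub>R y) = G x - s *\<^sub>R G y" using linear_diff[OF lin] linear_scale[OF lin] by simp
  have "0 \<le> G (x - s *\<^sub>R y) \<bullet> (x - s *\<^sub>R y)" by (rule psd)
  also have "\<dots> = G x \<bullet> x - s * (G x \<bullet> y) - s * (G y \<bullet> x) + s * s * (G y \<bullet> y)"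
    unfolding lin_eq by (simp only: inner_diff_left inner_diff_right inner_scaleR_left inner_scaleR_right) (simp add: algebra_simps)
  also have "\<dots> = s * s * a - 2 * s * c" using assms Gyx unfolding c_def a_def by simp
  finally have "2 * s * c \<le> s * (s * a)" by simp
  then have "2 * c \<le> s * a" using s0 by (simp add: mult.assoc)
  also have "s * a = c * (a / (a + 1))" unfolding s_def by simp
  also have "\<dots> \<le> c * 1" using c0 a0 by (intro mult_left_mono) auto
  finally show False using c0 by simp
qed

lemma shift:
  assumes e: "e > 0"
  shows "bij (\<lambda>y. e *\<^sub>R y + G y)"
    and "norm (inv (\<lambda>y. e *\<^sub>R y + G y) z) \<le> norm z / e"
    and "linear (inv (\<lambda>y. e *\<^sub>R y + G y))"
    and "inv (\<lambda>y. e *\<^sub>R y + G y) (e *\<^sub>R v + G v) = v"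
    and "e *\<^sub>R inv (\<lambda>y. e *\<^sub>R y + G y) z + G (inv (\<lambda>y. e *\<^sub>R y + G y) z) = z"
proof -
  define Pm where "Pm y = e *\<^sub>R y + G y" for y
  have Pm_eq: "(\<lambda>y. e *\<^sub>R y + G y) = Pm" unfolding Pm_def ..
  have Pmbl: "bounded_linear Pm" unfolding Pm_def[abs_def]
    by (rule bounded_linear_add[OF bounded_linear_scaleR_right bl])
  have Pml: "linear Pm" using Pmbl bounded_linear.linear by blast
  have coer: "e * (norm y)\<^sup>2 \<le> Pm y \<bullet> y" for y
    unfolding Pm_def using psd[of y] by (simp add: inner_add_left power2_norm_eq_inner)
  have nb: "e * norm y \<le> norm (Pm y)" for y
  proof (cases "y = 0")
    case True then show ?thesis by (simp add: linear_0[OF Pml])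
  next
    case False
    have "e * norm y * norm y \<le> norm (Pm y) * norm y"
      using coer[of y] norm_cauchy_schwarz[of "Pm y" y] by (simp add: power2_eq_square algebra_simps)
    then show ?thesis using False by (simp add: mult_le_cancel_right)
  qed
  have inj: "inj Pm"
  proof (rule injI)
    fix a b assume "Pm a = Pm b"
    then have "Pm (a - b) = 0" using linear_diff[OF Pml] by simp
    then have "e * norm (a - b) \<le> 0" using nb[of "a - b"] by simp
    then show "a = b" using e by (simp add: mult_le_0_iff)
  qed
  have clo: "closed (range Pm)"
    unfolding closed_sequential_limits
  proof (intro allI impI, elim conjE)
    fix yy l assume yr: "\<forall>n. yy n \<in> range Pm" and yl: "yy \<longlonglongrightarrow> l"
    have "\<forall>n. \<exists>x. yy n = Pm x" using yr by blast
    then obtain xx where xx: "\<And>n. yy n = Pm (xx n)" using choice[of "\<lambda>n x. yy n = Pm x"] by blast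
    have cy: "Cauchy yy" using yl by (rule LIMSEQ_imp_Cauchy)
    have "Cauchy xx"
    proof (rule metric_CauchyI)
      fix r :: real assume r: "r > 0"
      have er: "e * r > 0" using e r by simp
      obtain N where N: "\<forall>m\<ge>N. \<forall>n\<ge>N. dist (yy m) (yy n) < e * r"
        using metric_CauchyD[OF cy er] by blast
      have "dist (xx m) (xx n) < r" if "m \<ge> N" "n \<ge> N" for m n
      proof -
        have "e * norm (xx m - xx n) \<le> norm (Pm (xx m - xx n))" by (rule nb)
        also have "\<dots> = dist (yy m) (yy n)" using linear_diff[OF Pml] xx by (simp add: dist_norm)
        also have "\<dots> < e * r" using N that by blast
        finally show ?thesis using e by (simp add: dist_norm)
      qed
      then show "\<exists>N. \<forall>m\<ge>N. \<forall>n\<ge>N. dist (xx m) (xx n) < r" by blast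
    qed
    then obtain x0 where x0: "xx \<longlonglongrightarrow> x0" using Cauchy_convergent convergent_def by blast
    have "isCont Pm x0" by (rule linear_continuous_at[OF Pmbl])
    then have "(\<lambda>n. Pm (xx n)) \<longlonglongrightarrow> Pm x0" using x0 by (rule isCont_tendsto_compose)
    moreover have "yy = (\<lambda>n. Pm (xx n))" using xx by (intro ext) simp
    ultimately have "yy \<longlonglongrightarrow> Pm x0" by simp
    then have "l = Pm x0" using yl LIMSEQ_unique by blast
    then show "l \<in> range Pm" by blast
  qed
  have subR: "subspace (range Pm)" by (rule linear_subspace_image[OF Pml subspace_UNIV])
  have surj: "surj Pm"
  proof -
    have "l \<in> range Pm" for l
    proof -
      obtain p where p: "p \<in> range Pm" "\<forall>v\<in>range Pm. (l - p) \<bullet> v = 0"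
        using proj_closed_subspace[OF subR clo] by blast
      define q where "q = l - p"
      have "q \<bullet> Pm q = 0" using p unfolding q_def by blast
      then have "e * (norm q)\<^sup>2 \<le> 0" using coer[of q] by (simp add: inner_commute)
      then have "q = 0" using e by (simp add: mult_le_0_iff)
      then show ?thesis using p unfolding q_def by simp
    qed
    then show ?thesis by blast
  qed
  have bij: "bij Pm" using inj surj by (simp add: bij_def)
  have ri: "Pm (inv Pm z) = z" for z using surj by (simp add: surj_f_inv_f)
  have li: "inv Pm (Pm z) = z" for z using inj by (simp add: inv_f_f)
  show "bij (\<lambda>y. e *\<^sub>R y + G y)" unfolding Pm_eq by (rule bij)
  show "norm (inv (\<lambda>y. e *\<^sub>R y + G y) z) \<le> norm z / e" unfolding Pm_eq
    using nb[of "inv Pm z"] ri[of z] e by (simp add: field_simps)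
  show "linear (inv (\<lambda>y. e *\<^sub>R y + G y))" unfolding Pm_eq
  proof (rule linearI)
    fix a b show "inv Pm (a + b) = inv Pm a + inv Pm b"
      using injD[OF inj] ri linear_add[OF Pml] by metis
  next
    fix c a show "inv Pm (c *\<^sub>R a) = c *\<^sub>R inv Pm a"
      using injD[OF inj] ri linear_scale[OF Pml] by metis
  qed
  show "inv (\<lambda>y. e *\<^sub>R y + G y) (e *\<^sub>R v + G v) = v" unfolding Pm_eq using li[of v] by (simp add: Pm_def)
  show "e *\<^sub>R inv (\<lambda>y. e *\<^sub>R y + G y) z + G (inv (\<lambda>y. e *\<^sub>R y + G y) z) = z"
    unfolding Pm_eq using ri[of z] by (simp add: Pm_def)
qed


lemma scaled_inv_norm:
  assumes e: "e > 0" shows "norm (e *\<^sub>R inv (\<lambda>y. e *\<^sub>R y + G y) v) \<le> norm v"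
proof -
  have "norm (e *\<^sub>R inv (\<lambda>y. e *\<^sub>R y + G y) v) = e * norm (inv (\<lambda>y. e *\<^sub>R y + G y) v)" using e by simp
  also have "\<dots> \<le> e * (norm v / e)" using shift(2)[OF e, of v] e by (intro mult_left_mono) auto
  also have "\<dots> = norm v" using e by simp
  finally show ?thesis .
qed

lemma pos_imp_iii:
  assumes pos: "\<forall>x. x \<noteq> 0 \<longrightarrow> G x \<bullet> x > 0"
  shows "((\<lambda>e. e *\<^sub>R inv (\<lambda>y. e *\<^sub>R y + G y) x) \<longlongrightarrow> 0) (at_right 0)"
proof -
  have subG: "subspace (range G)" by (rule linear_subspace_image[OF lin subspace_UNIV])
  have dense: "x \<in> closure (range G)"
  proof -
    have "\<exists>p\<in>closure (range G). \<forall>v\<in>closure (range G). (x - p) \<bullet> v = 0"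
      by (rule proj_closed_subspace[OF subspace_closure_rv[OF subG] closed_closure])
    then obtain p where p: "p \<in> closure (range G)" "\<forall>v\<in>closure (range G). (x - p) \<bullet> v = 0"
      by (elim bexE) (intro that)
    define q where "q = x - p"
    have "G q \<in> range G" by (rule rangeI)
    then have "G q \<in> closure (range G)" using closure_subset[of "range G"] by (rule subsetD[rotated])
    then have "(x - p) \<bullet> G q = 0" using p(2) by (rule bspec[rotated])
    then have "q \<bullet> G q = 0" unfolding q_def .
    then have "G q \<bullet> q = 0" by (simp add: inner_commute)
    then have "q = 0"
    proof (rule contrapos_pp)
      assume "q \<noteq> 0"
      then have "G q \<bullet> q > 0" using pos by blast
      then show "G q \<bullet> q \<noteq> 0" by simp
    qed
    then show ?thesis using p unfolding q_def by simp
  qed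
  show ?thesis
    unfolding tendsto_iff
  proof (intro allI impI)
    fix r :: real assume r: "r > 0"
    have r2: "r / 2 > 0" using r by simp
    obtain y where y: "y \<in> range G" "dist y x < r / 2" using dense r2 unfolding closure_approachable by blast
    then obtain z where z: "y = G z" by blast
    define b where "b = r / (4 * (norm z + 1))"
    have nz1: "norm z + 1 > 0" using norm_ge_zero[of z] by linarith
    then have "4 * (norm z + 1) > 0" by simp
    then have b: "b > 0" using r unfolding b_def by (rule divide_pos_pos[rotated])
    have bz: "2 * b * norm z \<le> r / 2"
    proof -
      have "2 * b * norm z = r / 2 * (norm z / (norm z + 1))" unfolding b_def using nz1 by (simp add: field_simps)
      also have "\<dots> \<le> r / 2 * 1" using r nz1 by (intro mult_left_mono) (auto simp: divide_le_eq)
      finally show ?thesis by simp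
    qed
    show "\<forall>\<^sub>F e in at_right 0. dist (e *\<^sub>R inv (\<lambda>y. e *\<^sub>R y + G y) x) 0 < r"
      unfolding eventually_at_right_field
    proof (intro exI[of _ b] conjI allI impI)
      show "0 < b" by (rule b)
      fix e :: real assume e: "0 < e" "e < b"
      let ?I = "inv (\<lambda>y. e *\<^sub>R y + G y)"
      have linI: "linear ?I" by (rule shift(3)[OF e(1)])
      have "?I (G z) = z - e *\<^sub>R ?I z"
      proof -
        have "?I (e *\<^sub>R z + G z) = e *\<^sub>R ?I z + ?I (G z)" using linear_add[OF linI] linear_scale[OF linI] by simp
        then have "z = e *\<^sub>R ?I z + ?I (G z)" using shift(4)[OF e(1), of z] by simp
        then show ?thesis by (metis add_diff_cancel_left')
      qed
      moreover have "?I x = ?I (x - G z) + ?I (G z)" using linear_add[OF linI, of "x - G z" "G z"] by simp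
      ultimately have eq: "e *\<^sub>R ?I x = e *\<^sub>R ?I (x - G z) + (e *\<^sub>R z - e *\<^sub>R (e *\<^sub>R ?I z))"
        by (simp add: scaleR_add_right scaleR_diff_right)
      have n1: "norm (e *\<^sub>R ?I (x - G z)) \<le> norm (x - G z)" by (rule scaled_inv_norm[OF e(1)])
      have n2: "norm (e *\<^sub>R (e *\<^sub>R ?I z)) \<le> e * norm z"
      proof -
        have "norm (e *\<^sub>R (e *\<^sub>R ?I z)) = e * norm (e *\<^sub>R ?I z)" using e by simp
        also have "\<dots> \<le> e * norm z" using scaled_inv_norm[OF e(1), of z] e by (intro mult_left_mono) auto
        finally show ?thesis .
      qed
      have n3: "norm (e *\<^sub>R z) = e * norm z" using e by simp
      have t1: "norm (e *\<^sub>R ?I x) \<le> norm (e *\<^sub>R ?I (x - G z)) + norm (e *\<^sub>R z - e *\<^sub>R (e *\<^sub>R ?I z))"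
        unfolding eq by (rule norm_triangle_ineq)
      have t2: "norm (e *\<^sub>R z - e *\<^sub>R (e *\<^sub>R ?I z)) \<le> norm (e *\<^sub>R z) + norm (e *\<^sub>R (e *\<^sub>R ?I z))"
        by (rule norm_triangle_ineq4)
      have "norm (e *\<^sub>R ?I x) \<le> norm (e *\<^sub>R ?I (x - G z)) + (norm (e *\<^sub>R z) + norm (e *\<^sub>R (e *\<^sub>R ?I z)))"
        using t1 t2 by linarith
      also have "\<dots> \<le> norm (x - G z) + (e * norm z + e * norm z)" using n1 n2 n3 by linarith
      also have "\<dots> < r / 2 + 2 * b * norm z"
      proof -
        have "norm (x - G z) < r / 2" using y z by (simp add: dist_norm norm_minus_commute)
        moreover have "e * norm z \<le> b * norm z" using e by (simp add: mult_right_mono)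
        ultimately show ?thesis by linarith
      qed
      also have "\<dots> \<le> r" using bz by simp
      finally show "dist (e *\<^sub>R ?I x) 0 < r" by simp
    qed
  qed
qed

lemma iii_imp_pos:
  assumes iii: "\<forall>x. ((\<lambda>e. e *\<^sub>R inv (\<lambda>y. e *\<^sub>R y + G y) x) \<longlongrightarrow> 0) (at_right 0)"
  shows "\<forall>x. x \<noteq> 0 \<longrightarrow> G x \<bullet> x > 0"
proof (intro allI impI)
  fix x :: 'a assume x: "x \<noteq> 0"
  show "G x \<bullet> x > 0"
  proof (rule ccontr)
    assume "\<not> G x \<bullet> x > 0"
    then have "G x \<bullet> x = 0" using psd[of x] by simp
    then have Gx: "G x = 0" by (rule zero_form)
    have "\<forall>\<^sub>F e in at_right 0. e *\<^sub>R inv (\<lambda>y. e *\<^sub>R y + G y) x = x"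
      using eventually_at_right_less[of "0::real"]
    proof eventually_elim
      case (elim e)
      have "G ((1/e) *\<^sub>R x) = 0" using Gx linear_scale[OF lin] by simp
      then have "e *\<^sub>R ((1/e) *\<^sub>R x) + G ((1/e) *\<^sub>R x) = x" using elim by simp
      then have "inv (\<lambda>y. e *\<^sub>R y + G y) x = (1/e) *\<^sub>R x" using shift(4)[OF elim, of "(1/e) *\<^sub>R x"] by simp
      then show ?case using elim by simp
    qed
    from const_tendsto_at_right[OF this iii[rule_format, of x]] x show False by simp
  qed
qed

end

locale psdonb = psdop G + onb E M
  for G :: "'a::{real_inner,complete_space} \<Rightarrow> 'a" and E :: "'a set" and M :: "'a set"
begin

lemma orth_proj_fun: "orth_proj M = P"
  by (rule ext) (rule orth_proj_eq)

lemma contraction_step: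
  assumes e: "e > 0" and sm: "(\<Sum>i\<in>E. norm (e *\<^sub>R inv (\<lambda>y. e *\<^sub>R y + G y) i)) \<le> 1/2"
  shows "bij (\<lambda>y. e *\<^sub>R (y - P y) + G y)"
    and "norm (e *\<^sub>R inv (\<lambda>y. e *\<^sub>R (y - P y) + G y) x) \<le> 2 * norm (e *\<^sub>R inv (\<lambda>y. e *\<^sub>R y + G y) x)"
proof -
  define I where "I = inv (\<lambda>y. e *\<^sub>R y + G y)"
  define K where "K = (\<lambda>y. e *\<^sub>R (y - P y) + G y)"
  have linI: "linear I" unfolding I_def by (rule shift(3)[OF e])
  have IP: "I (e *\<^sub>R v + G v) = v" for v unfolding I_def by (rule shift(4)[OF e])
  have PI: "e *\<^sub>R I z + G (I z) = z" for z unfolding I_def by (rule shift(5)[OF e])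
  define Q where "Q v = e *\<^sub>R I v" for v
  have linQ: "linear Q" unfolding Q_def
    by (rule linearI) (simp_all add: linear_add[OF linI] linear_scale[OF linI] scaleR_add_right)
  have Qb: "norm (Q (P v)) \<le> 1/2 * norm v" for v
  proof -
    have "norm (Q (P v)) \<le> norm v * (\<Sum>i\<in>E. norm (Q i))" by (rule lin_P_bound[OF linQ])
    also have "\<dots> \<le> norm v * (1/2)" using sm unfolding Q_def I_def by (intro mult_left_mono) auto
    finally show ?thesis by simp
  qed
  have linP: "linear P" by (rule P_linear)
  define Phi where "Phi y w = I (y + e *\<^sub>R P w)" for y w
  have Phi_diff: "Phi y w - Phi y w' = Q (P (w - w'))" for y w w'
  proof -
    have "Phi y w - Phi y w' = I ((y + e *\<^sub>R P w) - (y + e *\<^sub>R P w'))"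
      unfolding Phi_def using linear_diff[OF linI] by metis
    also have "(y + e *\<^sub>R P w) - (y + e *\<^sub>R P w') = e *\<^sub>R P (w - w')"
      using linear_diff[OF linP] by (simp add: scaleR_diff_right)
    finally show ?thesis unfolding Q_def using linear_scale[OF linI] by simp
  qed
  have equiv: "K w = y \<longleftrightarrow> Phi y w = w" for y w
  proof
    assume "K w = y"
    then have "e *\<^sub>R w + G w = y + e *\<^sub>R P w" unfolding K_def by (simp add: scaleR_diff_right algebra_simps)
    then show "Phi y w = w" unfolding Phi_def using IP[of w] by simp
  next
    assume "Phi y w = w"
    then have "e *\<^sub>R w + G w = y + e *\<^sub>R P w" using PI[of "y + e *\<^sub>R P w"] unfolding Phi_def by simp
    then show "K w = y" unfolding K_def by (simp add: scaleR_diff_right algebra_simps)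
  qed
  have uniq: "\<exists>!w. K w = y" for y
  proof -
    have "\<exists>!w. Phi y w = w"
    proof (rule banach_fix_type[where c="1/2"])
      show "\<forall>w w'. dist (Phi y w) (Phi y w') \<le> 1/2 * dist w w'"
        using Qb by (simp add: dist_norm Phi_diff)
    qed auto
    then show ?thesis using equiv by simp
  qed
  then have bK: "bij K" unfolding bij_iff by blast
  then show "bij (\<lambda>y. e *\<^sub>R (y - P y) + G y)" unfolding K_def .
  define w where "w = inv K x"
  have "K w = x" unfolding w_def using bK by (simp add: bij_is_surj surj_f_inv_f)
  then have "Phi x w = w" using equiv by blast
  then have "e *\<^sub>R w = Q (x + e *\<^sub>R P w)" unfolding Phi_def Q_def by simp
  also have "\<dots> = Q x + Q (P (e *\<^sub>R w))"
    using linear_add[OF linQ] linear_scale[OF linP] by simp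
  finally have "norm (e *\<^sub>R w) \<le> norm (Q x) + norm (Q (P (e *\<^sub>R w)))" by (metis norm_triangle_ineq)
  also have "\<dots> \<le> norm (Q x) + 1/2 * norm (e *\<^sub>R w)" using Qb[of "e *\<^sub>R w"] by linarith
  finally have "norm (e *\<^sub>R w) \<le> 2 * norm (Q x)" by simp
  then show "norm (e *\<^sub>R inv (\<lambda>y. e *\<^sub>R (y - P y) + G y) x) \<le> 2 * norm (e *\<^sub>R inv (\<lambda>y. e *\<^sub>R y + G y) x)"
    unfolding w_def K_def Q_def I_def .
qed

lemma pos_imp_iv:
  assumes pos: "\<forall>x. x \<noteq> 0 \<longrightarrow> G x \<bullet> x > 0"
  shows "(\<forall>\<^sub>F e in at_right 0. bij (\<lambda>y. e *\<^sub>R (y - orth_proj M y) + G y)) \<and>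
         (\<forall>x. ((\<lambda>e. e *\<^sub>R inv (\<lambda>y. e *\<^sub>R (y - orth_proj M y) + G y) x) \<longlongrightarrow> 0) (at_right 0))"
proof -
  have iii: "((\<lambda>e. e *\<^sub>R inv (\<lambda>y. e *\<^sub>R y + G y) x) \<longlongrightarrow> 0) (at_right 0)" for x
    using pos_imp_iii[OF pos] .
  have "((\<lambda>e. \<Sum>i\<in>E. norm (e *\<^sub>R inv (\<lambda>y. e *\<^sub>R y + G y) i)) \<longlongrightarrow> (\<Sum>i\<in>E. 0)) (at_right 0)"
    by (intro tendsto_sum tendsto_norm_zero iii)
  then have "\<forall>\<^sub>F e in at_right 0. (\<Sum>i\<in>E. norm (e *\<^sub>R inv (\<lambda>y. e *\<^sub>R y + G y) i)) < 1/2"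
    by (rule order_tendstoD) simp
  moreover have "\<forall>\<^sub>F e in at_right (0::real). e > 0" by (rule eventually_at_right_less)
  ultimately have ev: "\<forall>\<^sub>F e in at_right 0. e > 0 \<and> (\<Sum>i\<in>E. norm (e *\<^sub>R inv (\<lambda>y. e *\<^sub>R y + G y) i)) \<le> 1/2"
    by eventually_elim auto
  show ?thesis unfolding orth_proj_fun
  proof
    show "\<forall>\<^sub>F e in at_right 0. bij (\<lambda>y. e *\<^sub>R (y - P y) + G y)"
      using ev by eventually_elim (use contraction_step(1) in blast)
    show "\<forall>x. ((\<lambda>e. e *\<^sub>R inv (\<lambda>y. e *\<^sub>R (y - P y) + G y) x) \<longlongrightarrow> 0) (at_right 0)"
    proof
      fix x
      show "((\<lambda>e. e *\<^sub>R inv (\<lambda>y. e *\<^sub>R (y - P y) + G y) x) \<longlongrightarrow> 0) (at_right 0)"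
      proof (rule Lim_null_comparison)
        show "\<forall>\<^sub>F e in at_right 0. norm (e *\<^sub>R inv (\<lambda>y. e *\<^sub>R (y - P y) + G y) x)
              \<le> 2 * norm (e *\<^sub>R inv (\<lambda>y. e *\<^sub>R y + G y) x)"
          using ev by eventually_elim (use contraction_step(2) in blast)
        show "((\<lambda>e. 2 * norm (e *\<^sub>R inv (\<lambda>y. e *\<^sub>R y + G y) x)) \<longlongrightarrow> 0) (at_right 0)"
          by (intro tendsto_mult_right_zero tendsto_norm_zero iii)
      qed
    qed
  qed
qed

lemma iv_imp_pos:
  assumes bijev: "\<forall>\<^sub>F e in at_right 0. bij (\<lambda>y. e *\<^sub>R (y - orth_proj M y) + G y)"
    and lim: "\<forall>x. ((\<lambda>e. e *\<^sub>R inv (\<lambda>y. e *\<^sub>R (y - orth_proj M y) + G y) x) \<longlongrightarrow> 0) (at_right 0)"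
  shows "\<forall>x. x \<noteq> 0 \<longrightarrow> G x \<bullet> x > 0"
proof (intro allI impI)
  fix x :: 'a assume x: "x \<noteq> 0"
  show "G x \<bullet> x > 0"
  proof (rule ccontr)
    assume "\<not> G x \<bullet> x > 0"
    then have "G x \<bullet> x = 0" using psd[of x] by simp
    then have Gx: "G x = 0" by (rule zero_form)
    have ev: "\<forall>\<^sub>F e in at_right 0. e *\<^sub>R inv (\<lambda>y. e *\<^sub>R (y - P y) + G y) (x - P x) = x"
      using bijev[unfolded orth_proj_fun] eventually_at_right_less[of "0::real"]
    proof eventually_elim
      case (elim e)
      have lp: "P ((1/e) *\<^sub>R x) = (1/e) *\<^sub>R P x" using linear_scale[OF P_linear] by simp
      have lg: "G ((1/e) *\<^sub>R x) = 0" using Gx linear_scale[OF lin] by simp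
      have calc: "e *\<^sub>R ((1/e) *\<^sub>R x - P ((1/e) *\<^sub>R x)) + G ((1/e) *\<^sub>R x) = x - P x"
        using elim(2) unfolding lp lg by (simp add: scaleR_diff_right)
      have "inv (\<lambda>y. e *\<^sub>R (y - P y) + G y) (e *\<^sub>R ((1/e) *\<^sub>R x - P ((1/e) *\<^sub>R x)) + G ((1/e) *\<^sub>R x)) = (1/e) *\<^sub>R x"
        using inv_f_f[OF bij_is_inj[OF elim(1)], of "(1/e) *\<^sub>R x"] by simp
      then have "inv (\<lambda>y. e *\<^sub>R (y - P y) + G y) (x - P x) = (1/e) *\<^sub>R x"
        by (simp only: calc)
      then show ?case using elim(2) by simp
    qed
    from const_tendsto_at_right[OF ev lim[unfolded orth_proj_fun, rule_format, of "x - P x"]] x show False by simp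
  qed
qed

end

context gsys
begin

lemma approx_imp_pos:
  assumes A: "approx_controllable S B T"
  shows "\<forall>x. x \<noteq> 0 \<longrightarrow> gramian S B T x \<bullet> x > 0"
proof (intro allI impI)
  fix x :: 'x assume x: "x \<noteq> 0"
  show "gramian S B T x \<bullet> x > 0"
  proof (rule ccontr)
    assume "\<not> gramian S B T x \<bullet> x > 0"
    then have "gramian S B T x \<bullet> x = 0" using gram_psd[of x] by simp
    then have w0: "\<And>s. s \<in> {0..T} \<Longrightarrow> w x s = 0" using gram_zero by blast
    have nx: "norm x > 0" using x by simp
    obtain u where u: "u \<in> L2_controls T" "norm (mild_solution S B 0 u T - x) < norm x"
      using A nx unfolding approx_controllable_def by blast
    define I where "I = integral {0..T} (\<lambda>s. S (T - s) (B (u s)))"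
    have ms: "mild_solution S B 0 u T = I" unfolding mild_solution_def I_def by simp
    have Ix: "I \<bullet> x = 0"
    proof (cases "(\<lambda>s. S (T - s) (B (u s))) integrable_on {0..T}")
      case True
      have "I \<bullet> x = integral {0..T} ((\<lambda>v. v \<bullet> x) \<circ> (\<lambda>s. S (T - s) (B (u s))))"
        unfolding I_def by (rule integral_linear[OF True bounded_linear_inner_left, symmetric])
      also have "\<dots> = integral {0..T} (\<lambda>s. 0)"
      proof (rule integral_cong)
        fix s assume s: "s \<in> {0..T}"
        have "S (T - s) (B (u s)) \<bullet> x = u s \<bullet> w x s" by (simp add: ad_S ad_B w_def)
        then show "((\<lambda>v. v \<bullet> x) \<circ> (\<lambda>s. S (T - s) (B (u s)))) s = 0" using w0[OF s] by simp
      qed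
      finally show ?thesis by simp
    next
      case False then have "I = 0" unfolding I_def by (rule not_integrable_integral)
      then show ?thesis by simp
    qed
    have "(norm (I - x))\<^sup>2 = (norm I)\<^sup>2 + (norm x)\<^sup>2"
      using Ix by (simp add: power2_norm_eq_inner inner_diff_left inner_diff_right inner_commute)
    then have "(norm x)\<^sup>2 \<le> (norm (I - x))\<^sup>2" by simp
    then have "norm x \<le> norm (I - x)" by (rule power2_le_imp_le) simp
    with u(2) ms show False by simp
  qed
qed

end

theorem theorem4:
  fixes S :: "real \<Rightarrow> 'x::{real_inner,complete_space} \<Rightarrow>\<^sub>L 'x"
    and D :: "'x set" and A :: "'x \<Rightarrow> 'x"
    and B :: "'u::{real_inner,complete_space} \<Rightarrow>\<^sub>L 'x"
    and T :: real and M :: "'x set"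
  assumes "C0_semigroup S"
    and "generator S D A"
    and "T > 0"
    and "subspace M" and "\<exists>F. finite F \<and> M = span F"
  shows "(approx_controllable S B T \<longleftrightarrow>
            (\<forall>x. x \<noteq> 0 \<longrightarrow> gramian S B T x \<bullet> x > 0))
       \<and> ((\<forall>x. x \<noteq> 0 \<longrightarrow> gramian S B T x \<bullet> x > 0) \<longleftrightarrow>
            (\<forall>x. ((\<lambda>e. e *\<^sub>R inv (\<lambda>y. e *\<^sub>R y + gramian S B T y) x) \<longlongrightarrow> 0) (at_right 0)))
       \<and> ((\<forall>x. ((\<lambda>e. e *\<^sub>R inv (\<lambda>y. e *\<^sub>R y + gramian S B T y) x) \<longlongrightarrow> 0) (at_right 0)) \<longleftrightarrow>
            ((\<forall>\<^sub>F e in at_right 0. bij (\<lambda>y. e *\<^sub>R (y - orth_proj M y) + gramian S B T y)) \<and>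
             (\<forall>x. ((\<lambda>e. e *\<^sub>R inv (\<lambda>y. e *\<^sub>R (y - orth_proj M y) + gramian S B T y) x) \<longlongrightarrow> 0)
                    (at_right 0))))
       \<and> (((\<forall>\<^sub>F e in at_right 0. bij (\<lambda>y. e *\<^sub>R (y - orth_proj M y) + gramian S B T y)) \<and>
             (\<forall>x. ((\<lambda>e. e *\<^sub>R inv (\<lambda>y. e *\<^sub>R (y - orth_proj M y) + gramian S B T y) x) \<longlongrightarrow> 0)
                    (at_right 0))) \<longleftrightarrow>
            finite_approx_controllable S B T M)"
proof -
  interpret gsys S B T using assms(1,3) by unfold_locales
  interpret G: psdop "gramian S B T"
    unfolding psdop_def using gram_bl gram_sym gram_psd by blast
  obtain F where F: "finite F" "M = span F" using assms(5) by blast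
  obtain E where E: "finite E" "span E = span F" "\<And>e. e \<in> E \<Longrightarrow> norm e = 1"
    "\<And>e e'. e \<in> E \<Longrightarrow> e' \<in> E \<Longrightarrow> e \<noteq> e' \<Longrightarrow> e \<bullet> e' = 0"
    using orthonormal_basis_span[OF F(1)] by blast
  interpret O: psdonb "gramian S B T" E M
    by unfold_locales (use E F in auto)
  let ?A = "approx_controllable S B T"
  let ?Pos = "\<forall>x. x \<noteq> 0 \<longrightarrow> gramian S B T x \<bullet> x > 0"
  let ?Iii = "\<forall>x. ((\<lambda>e. e *\<^sub>R inv (\<lambda>y. e *\<^sub>R y + gramian S B T y) x) \<longlongrightarrow> 0) (at_right 0)"
  let ?Iv = "(\<forall>\<^sub>F e in at_right 0. bij (\<lambda>y. e *\<^sub>R (y - orth_proj M y) + gramian S B T y)) \<and>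
             (\<forall>x. ((\<lambda>e. e *\<^sub>R inv (\<lambda>y. e *\<^sub>R (y - orth_proj M y) + gramian S B T y) x) \<longlongrightarrow> 0)
                    (at_right 0))"
  let ?V = "finite_approx_controllable S B T M"
  have A_Pos: "?A \<Longrightarrow> ?Pos" by (rule approx_imp_pos)
  have Pos_Iii: "?Pos \<Longrightarrow> ?Iii" by (intro allI, rule G.pos_imp_iii, assumption)
  have Iii_Pos: "?Iii \<Longrightarrow> ?Pos" by (rule G.iii_imp_pos)
  have Pos_Iv: "?Pos \<Longrightarrow> ?Iv" by (rule O.pos_imp_iv)
  have Iv_Pos: "?Iv \<Longrightarrow> ?Pos" by (erule conjE, rule O.iv_imp_pos)
  have V_A: "?V \<Longrightarrow> ?A" unfolding finite_approx_controllable_def approx_controllable_def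
  proof (intro allI impI)
    fix y0 yf :: 'x and e :: real
    assume V: "\<forall>y0 yf e. e > 0 \<longrightarrow> (\<exists>u\<in>L2_controls T. norm (mild_solution S B y0 u T - yf) < e \<and>
            orth_proj M (mild_solution S B y0 u T) = orth_proj M yf)" and e: "e > 0"
    from V e obtain u where "u \<in> L2_controls T" "norm (mild_solution S B y0 u T - yf) < e"
      by (meson)
    then show "\<exists>u\<in>L2_controls T. norm (mild_solution S B y0 u T - yf) < e" by blast
  qed
  have Iv_V: "?Iv \<Longrightarrow> ?V"
  proof -
    assume iv: ?Iv
    show ?V unfolding finite_approx_controllable_def
    proof (intro allI impI)
      fix y0 yf :: 'x and eps :: real assume eps: "eps > 0"
      define h where "h = yf - S T y0"
      let ?K = "\<lambda>e. (\<lambda>y. e *\<^sub>R (y - orth_proj M y) + gramian S B T y)"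
      have "\<forall>\<^sub>F e in at_right 0. dist (e *\<^sub>R inv (?K e) h) 0 < eps"
        using iv eps by (intro tendstoD) auto
      moreover have "\<forall>\<^sub>F e in at_right 0. bij (?K e)" using iv by blast
      moreover have "\<forall>\<^sub>F e in at_right (0::real). e > 0" by (rule eventually_at_right_less)
      ultimately have "\<forall>\<^sub>F e in at_right 0. e > 0 \<and> bij (?K e) \<and> dist (e *\<^sub>R inv (?K e) h) 0 < eps"
        by eventually_elim blast
      then obtain e where e: "e > 0" "bij (?K e)" "dist (e *\<^sub>R inv (?K e) h) 0 < eps"
        using eventually_happens trivial_limit_at_right_real by blast
      define x where "x = inv (?K e) h"
      have Kx: "e *\<^sub>R (x - O.P x) + gramian S B T x = h"
        using surj_f_inv_f[OF bij_is_surj[OF e(2)], of h] unfolding x_def O.orth_proj_fun by simp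
      define u where "u = w x"
      have uL2: "u \<in> L2_controls T" unfolding u_def by (rule cont_L2[OF w_cont Tpos])
      have ms: "mild_solution S B y0 u T = S T y0 + gramian S B T x"
        unfolding mild_solution_def u_def gram_eq ..
      have diff: "mild_solution S B y0 u T - yf = - (e *\<^sub>R (x - O.P x))"
        using ms Kx unfolding h_def by (simp add: algebra_simps)
      have "norm (mild_solution S B y0 u T - yf) = e * norm (x - O.P x)" using diff e by simp
      also have "\<dots> \<le> e * norm x" using O.P_res_le[of x] e by (intro mult_left_mono) auto
      also have "\<dots> < eps" using e(1,3) unfolding x_def by simp
      finally have n: "norm (mild_solution S B y0 u T - yf) < eps" .
      have "O.P (mild_solution S B y0 u T) = O.P (yf - e *\<^sub>R (x - O.P x))"
        using diff by (metis add_diff_cancel_left' diff_add_cancel uminus_add_conv_diff)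
      also have "\<dots> = O.P yf - e *\<^sub>R (O.P x - O.P (O.P x))"
        using linear_diff[OF O.P_linear] linear_scale[OF O.P_linear] by simp
      also have "\<dots> = O.P yf" using O.P_idem by simp
      finally have p: "orth_proj M (mild_solution S B y0 u T) = orth_proj M yf" unfolding O.orth_proj_fun .
      show "\<exists>u\<in>L2_controls T. norm (mild_solution S B y0 u T - yf) < eps \<and>
              orth_proj M (mild_solution S B y0 u T) = orth_proj M yf"
        using uL2 n p by blast
    qed
  qed
  have 1: "?A = ?Pos"
  proof
    assume ?A then show ?Pos by (rule A_Pos)
  next
    assume ?Pos then show ?A by (rule V_A[OF Iv_V[OF Pos_Iv]])
  qed
  have 2: "?Pos = ?Iii"
  proof
    assume ?Pos then show ?Iii by (rule Pos_Iii)
  next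
    assume ?Iii then show ?Pos by (rule Iii_Pos)
  qed
  have 3: "?Iii = ?Iv"
  proof
    assume ?Iii then show ?Iv by (rule Pos_Iv[OF Iii_Pos])
  next
    assume ?Iv then show ?Iii by (rule Pos_Iii[OF Iv_Pos])
  qed
  have 4: "?Iv = ?V"
  proof
    assume ?Iv then show ?V by (rule Iv_V)
  next
    assume ?V then show ?Iv by (rule Pos_Iv[OF A_Pos[OF V_A]])
  qed
  show ?thesis using 1 2 3 4 by (intro conjI)
qed

end
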